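(* Let $\mu\in\mathcal M$ be not a point mass, $G=G_\mu$, $E_\pm=E_\pm(\mu)$, and let $n$ be a positive integer with $n\ge\tau(\mu)$. Then $\mathsf A(u)=nG^{[-1]}_\mu(u)+\frac{1-n}{u}$ has a minimal real positive critical point $\mathsf z\in(0,G(E_+))$, with $\mathsf A''(\mathsf z)>0$ and $G^{[-1]}_\mu(\mathsf z)-E_+\ge4(E_+-E_-)$. Furthermore $\mathsf z=G_{\mu^{\boxplus n}}(E_+(\mu^{\boxplus n}))$ and $\lim_{z\searrow E_+(\mu^{\boxplus n})}G'_{\mu^{\boxplus n}}(z)=-\infty$.
   Context: $\mathcal M$: compactly supported Borel probability measures on $\mathbb R$; $G_\mu(z)=\int\frac{d\mu(x)}{z-x}$; $E_\pm(\mu)=\sup/\inf\operatorname{supp}\mu$; $G(E_+)=\lim_{x\searrow E_+}G(x)$. $x(\mu)=4(E_+(\mu)-E_-(\mu))+E_+(\mu)$ and $\tau(\mu)=\big(1+G_\mu(x(\mu))^2/G'_\mu(x(\mu))\big)^{-1}$. $\mu^{\boxplus n}$ is the $n$-fold free additive convolution. $G^{[-1]}_\mu$ is defined on $\mathfrak O_\mu$: the set of $u\in\mathbb C$ for which there is $z_u\notin\operatorname{supp}\mu$ with $u=G_\mu(z_u)$, $G'_\mu(z_u)\ne0$, and a simple closed curve $\gamma\ni z_u$ positively oriented around $\operatorname{supp}\mu$ along which $\operatorname{Re}(zu)-\int\log|z-x|d\mu(x)$ is strictly smaller than at $z_u$ for all $z\in\gamma\setminus\{z_u\}$; such $z_u$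 is unique and $G^{[-1]}_\mu(u):=z_u$ (on $(0,G(E_+))$ this is the inverse of the decreasing bijection $G:(E_+,\infty)\to(0,G(E_+))$). *)

theory Defs
  imports "HOL-Probability.Probability"
begin

definition supp :: "real measure \<Rightarrow> real set" where
  "supp \<mu> = {x. \<forall>e>0. emeasure \<mu> (ball x e) > 0}"

definition in_M :: "real measure \<Rightarrow> bool" where
  "in_M \<mu> \<longleftrightarrow> prob_space \<mu> \<and> sets \<mu> = sets borel \<and> compact (supp \<mu>)"

definition Eplus :: "real measure \<Rightarrow> real" where
  "Eplus \<mu> = Sup (supp \<mu>)"

definition Eminus :: "real measure \<Rightarrow> real" where
  "Eminus \<mu> = Inf (supp \<mu>)"

text \<open>Cauchy transform restricted to the real axis.\<close>
definition Gr :: "real measure \<Rightarrow> real \<Rightarrow> real" where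
  "Gr \<mu> x = (LINT t|\<mu>. 1 / (x - t))"

text \<open>G(E_+) as the (possibly infinite) right limit.\<close>
definition GEp :: "real measure \<Rightarrow> ereal" where
  "GEp \<mu> = Lim (at_right (Eplus \<mu>)) (\<lambda>x. ereal (Gr \<mu> x))"

text \<open>Inverse of the decreasing bijection G : (E_+,\<infinity>) \<rightarrow> (0, G(E_+)).\<close>
definition Ginv :: "real measure \<Rightarrow> real \<Rightarrow> real" where
  "Ginv \<mu> u = (THE y. Eplus \<mu> < y \<and> Gr \<mu> y = u)"

definition xpt :: "real measure \<Rightarrow> real" where
  "xpt \<mu> = 4 * (Eplus \<mu> - Eminus \<mu>) + Eplus \<mu>"

definition tau :: "real measure \<Rightarrow> real" where
  "tau \<mu> = inverse (1 + (Gr \<mu> (xpt \<mu>))\<^sup>2 / deriv (Gr \<mu>) (xpt \<mu>))"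

text \<open>\<nu> is the n-fold free additive convolution power of \<mu>: \<nu> \<in> M and the
  R-transform relation R_\<nu> = n R_\<mu>, i.e. K_\<nu>(u) = n K_\<mu>(u) + (1-n)/u, holds
  in the form K_\<nu>(G_\<nu>(x)) = x for all sufficiently large real x.\<close>
definition is_free_conv_power :: "real measure \<Rightarrow> nat \<Rightarrow> real measure \<Rightarrow> bool" where
  "is_free_conv_power \<mu> n \<nu> \<longleftrightarrow> in_M \<nu> \<and>
     (\<exists>R. \<forall>x>R. real n * Ginv \<mu> (Gr \<nu> x) + (1 - real n) / Gr \<nu> x = x)"

definition Afun :: "real measure \<Rightarrow> nat \<Rightarrow> real \<Rightarrow> real" where
  "Afun \<mu> n u = real n * Ginv \<mu> u + (1 - real n) / u"

end

theory Submission
  imports Defs "HOL-Complex_Analysis.Complex_Analysis"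
begin
lemma inM_basic:
  assumes "in_M \<mu>"
  shows "prob_space \<mu>" "sets \<mu> = sets borel" "space \<mu> = UNIV" "compact (supp \<mu>)"
  using assms unfolding in_M_def by (auto dest: sets_eq_imp_space_eq)

lemma null_compact:
  assumes "in_M \<mu>" "compact K" "K \<inter> supp \<mu> = {}"
  shows "emeasure \<mu> K = 0"
proof -
  have sets: "sets \<mu> = sets borel" using inM_basic[OF assms(1)] by auto
  have "\<forall>x\<in>K. \<exists>e>0. emeasure \<mu> (ball x e) = 0"
    using assms(3) unfolding supp_def by (force simp: not_less)
  then obtain e where e: "\<And>x. x\<in>K \<Longrightarrow> e x > 0 \<and> emeasure \<mu> (ball x (e x)) = 0" by metis
  have "K \<subseteq> (\<Union>x\<in>K. ball x (e x))" using e by force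
  then obtain C where C: "C \<subseteq> K" "finite C" "K \<subseteq> (\<Union>x\<in>C. ball x (e x))"
    using compactE_image[OF assms(2), of K "\<lambda>x. ball x (e x)"] by blast
  have M: "(\<Union>x\<in>C. ball x (e x)) \<in> sets \<mu>" unfolding sets by (intro borel_open open_UN) auto
  have "emeasure \<mu> K \<le> emeasure \<mu> (\<Union>x\<in>C. ball x (e x))"
    by (rule emeasure_mono[OF C(3) M])
  also have "\<dots> \<le> (\<Sum>x\<in>C. emeasure \<mu> (ball x (e x)))"
    by (rule emeasure_subadditive_finite[OF C(2)]) (simp add: sets image_subset_iff)
  also have "\<dots> = 0" using C(1) e by (auto intro!: sum.neutral)
  finally show ?thesis by simp
qed
lemma null_atLeast:
  assumes "in_M \<mu>" "\<And>t. t \<ge> c \<Longrightarrow> t \<notin> supp \<mu>"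
  shows "emeasure \<mu> {c..} = 0"
proof -
  have sets: "sets \<mu> = sets borel" using inM_basic[OF assms(1)] by auto
  have "{c..} = (\<Union>k::nat. {c..c + real k})" by auto (metis add.commute diff_le_eq real_arch_simple)
  moreover have "emeasure \<mu> (\<Union>k::nat. {c..c + real k}) = 0"
    by (rule emeasure_UN_eq_0) (use assms in \<open>auto intro!: null_compact simp: sets\<close>)
  ultimately show ?thesis by simp
qed

lemma null_atMost:
  assumes "in_M \<mu>" "\<And>t. t \<le> c \<Longrightarrow> t \<notin> supp \<mu>"
  shows "emeasure \<mu> {..c} = 0"
proof -
  have sets: "sets \<mu> = sets borel" using inM_basic[OF assms(1)] by auto
  have "{..c} = (\<Union>k::nat. {c - real k..c})" by auto (metis add.commute diff_le_eq real_arch_simple)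
  moreover have "emeasure \<mu> (\<Union>k::nat. {c - real k..c}) = 0"
    by (rule emeasure_UN_eq_0) (use assms in \<open>auto intro!: null_compact simp: sets\<close>)
  ultimately show ?thesis by simp
qed

lemma supp_nonempty:
  assumes "in_M \<mu>" shows "supp \<mu> \<noteq> {}"
proof
  assume e: "supp \<mu> = {}"
  interpret prob_space \<mu> using inM_basic[OF assms] by auto
  have sets: "sets \<mu> = sets borel" using inM_basic[OF assms(1)] by auto
  have U: "UNIV = {..0::real} \<union> {0..}" by auto
  have "emeasure \<mu> UNIV \<le> emeasure \<mu> {..0} + emeasure \<mu> {0..}"
    using emeasure_subadditive[of "{..0::real}" \<mu> "{0..}"] by (simp add: sets U[symmetric])
  also have "\<dots> = 0" using null_atMost[OF assms, of 0] null_atLeast[OF assms, of 0] e by auto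
  finally show False using emeasure_space_1 inM_basic(3)[OF assms] by simp
qed

lemma Eplus_in:
  assumes "in_M \<mu>" shows "Eplus \<mu> \<in> supp \<mu>" "Eminus \<mu> \<in> supp \<mu>"
    "\<And>t. t \<in> supp \<mu> \<Longrightarrow> Eminus \<mu> \<le> t \<and> t \<le> Eplus \<mu>"
proof -
  have c: "compact (supp \<mu>)" using inM_basic[OF assms] by auto
  show "Eplus \<mu> \<in> supp \<mu>" unfolding Eplus_def
    by (rule closed_contains_Sup) (use c supp_nonempty[OF assms] in \<open>auto intro: compact_imp_closed compact_imp_bounded bounded_imp_bdd_above\<close>)
  show "Eminus \<mu> \<in> supp \<mu>" unfolding Eminus_def
    by (rule closed_contains_Inf) (use c supp_nonempty[OF assms] in \<open>auto intro: compact_imp_closed compact_imp_bounded bounded_imp_bdd_below\<close>)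
  fix t assume "t \<in> supp \<mu>"
  then show "Eminus \<mu> \<le> t \<and> t \<le> Eplus \<mu>" unfolding Eminus_def Eplus_def
    using c by (auto intro!: cInf_lower cSup_upper compact_imp_bounded bounded_imp_bdd_above bounded_imp_bdd_below)
qed

lemma AE_supp:
  assumes "in_M \<mu>" shows "AE t in \<mu>. Eminus \<mu> \<le> t \<and> t \<le> Eplus \<mu>"
proof -
  have sets: "sets \<mu> = sets borel" using inM_basic[OF assms(1)] by auto
  have sp: "space \<mu> = UNIV" using inM_basic[OF assms(1)] by auto
  have N1: "emeasure \<mu> (\<Union>k::nat. {Eplus \<mu> + 1/(real k+1)..}) = 0"
    apply (rule emeasure_UN_eq_0)
     apply (rule null_atLeast[OF assms])
    using Eplus_in(3)[OF assms] apply (smt (verit) divide_pos_pos of_nat_less_0_iff)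
    by (auto simp: sets)
  have N2: "emeasure \<mu> (\<Union>k::nat. {..Eminus \<mu> - 1/(real k+1)}) = 0"
    apply (rule emeasure_UN_eq_0)
     apply (rule null_atMost[OF assms])
    using Eplus_in(3)[OF assms] apply (smt (verit) divide_pos_pos of_nat_less_0_iff)
    by (auto simp: sets)
  have "{t. \<not> (Eminus \<mu> \<le> t \<and> t \<le> Eplus \<mu>)} \<subseteq> (\<Union>k::nat. {Eplus \<mu> + 1/(real k+1)..}) \<union> (\<Union>k::nat. {..Eminus \<mu> - 1/(real k+1)})"
  proof
    fix t assume "t \<in> {t. \<not> (Eminus \<mu> \<le> t \<and> t \<le> Eplus \<mu>)}"
    then consider "t > Eplus \<mu>" | "t < Eminus \<mu>" by auto
    then show "t \<in> (\<Union>k::nat. {Eplus \<mu> + 1/(real k+1)..}) \<union> (\<Union>k::nat. {..Eminus \<mu> - 1/(real k+1)})"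
    proof cases
      case 1
      then obtain k::nat where k: "1/(real k + 1) < t - Eplus \<mu>"
        using reals_Archimedean[of "t - Eplus \<mu>"] by (auto simp: inverse_eq_divide add.commute)
      then show ?thesis by (intro UnI1 UN_I[of k]) auto
    next
      case 2
      then obtain k::nat where k: "1/(real k + 1) < Eminus \<mu> - t"
        using reals_Archimedean[of "Eminus \<mu> - t"] by (auto simp: inverse_eq_divide add.commute)
      then show ?thesis by (intro UnI2 UN_I[of k]) auto
    qed
  qed
  moreover have "emeasure \<mu> ((\<Union>k::nat. {Eplus \<mu> + 1/(real k+1)..}) \<union> (\<Union>k::nat. {..Eminus \<mu> - 1/(real k+1)})) = 0"
  proof -
    have "emeasure \<mu> ((\<Union>k::nat. {Eplus \<mu> + 1/(real k+1)..}) \<union> (\<Union>k::nat. {..Eminus \<mu> - 1/(real k+1)}))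
       \<le> emeasure \<mu> (\<Union>k::nat. {Eplus \<mu> + 1/(real k+1)..}) + emeasure \<mu> (\<Union>k::nat. {..Eminus \<mu> - 1/(real k+1)})"
      by (rule emeasure_subadditive) (auto simp: sets)
    then show ?thesis using N1 N2 by simp
  qed
  ultimately show ?thesis
    by (intro AE_I[where N="(\<Union>k::nat. {Eplus \<mu> + 1/(real k+1)..}) \<union> (\<Union>k::nat. {..Eminus \<mu> - 1/(real k+1)})"])
       (auto simp: sp sets)
qed

lemma AE_point_return:
  assumes "in_M \<mu>" "AE t in \<mu>. t = c"
  shows "\<mu> = return borel c"
proof (rule measure_eqI)
  interpret prob_space \<mu> using inM_basic[OF assms(1)] by auto
  have sets: "sets \<mu> = sets borel" using inM_basic[OF assms(1)] by auto
  show "sets \<mu> = sets (return borel c)" using sets by simp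
  fix A assume A: "A \<in> sets \<mu>"
  show "emeasure \<mu> A = emeasure (return borel c) A"
  proof (cases "c \<in> A")
    case True
    then have "emeasure \<mu> A = 1" using A assms(2) by (intro emeasure_eq_1_AE) auto
    then show ?thesis using A True sets by simp
  next
    case False
    have sp: "space \<mu> = UNIV" using inM_basic[OF assms(1)] by auto
    have "AE x in \<mu>. x \<notin> A" using assms(2) False by (auto elim!: AE_mp)
    then have "emeasure \<mu> A = 0" using A by (subst AE_iff_measurable[of A \<mu> "\<lambda>x. x \<notin> A", symmetric]) (auto simp: sp)
    then show ?thesis using A False sets by simp
  qed
qed

lemma deriv_under_integral:
  fixes f :: "'a::{real_normed_field,banach,second_countable_topology} \<Rightarrow> real \<Rightarrow> 'a"
  assumes M: "finite_measure M"
   and K: "AE t in M. t \<in> K"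
   and S: "open S" "w0 \<in> S" "convex S"
   and der: "\<And>t w. t \<in> K \<Longrightarrow> w \<in> S \<Longrightarrow> ((\<lambda>w. f w t) has_field_derivative f' w t) (at w)"
   and bnd: "\<And>t w. t \<in> K \<Longrightarrow> w \<in> S \<Longrightarrow> norm (f' w t) \<le> C"
   and meas: "\<And>w. (\<lambda>t. f w t) \<in> borel_measurable M" "(\<lambda>t. f' w0 t) \<in> borel_measurable M"
   and int: "\<And>w. w \<in> S \<Longrightarrow> integrable M (\<lambda>t. f w t)"
  shows "((\<lambda>w. LINT t|M. f w t) has_field_derivative (LINT t|M. f' w0 t)) (at w0)"
  unfolding has_field_derivative_iff
proof (subst tendsto_at_iff_sequentially, intro allI impI)
  interpret finite_measure M by fact
  fix X :: "nat \<Rightarrow> 'a" assume X: "\<forall>i. X i \<in> UNIV - {w0}" "X \<longlonglongrightarrow> w0"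
  have evS: "eventually (\<lambda>i. X i \<in> S) sequentially"
    using X(2) S(1,2) by (rule topological_tendstoD)
  define s where "s i t = (if X i \<in> S then (f (X i) t - f w0 t) / (X i - w0) else 0)" for i t
  have "(\<lambda>i. integral\<^sup>L M (s i)) \<longlonglongrightarrow> integral\<^sup>L M (\<lambda>t. f' w0 t)"
  proof (rule integral_dominated_convergence[where w="\<lambda>_. C"])
    show "(\<lambda>t. f' w0 t) \<in> borel_measurable M" by fact
    show "s i \<in> borel_measurable M" for i
      unfolding s_def using meas by (cases "X i \<in> S") auto
    show "integrable M (\<lambda>_. C)" by simp
    show "AE t in M. (\<lambda>i. s i t) \<longlonglongrightarrow> f' w0 t"
      using K
    proof (rule AE_mp, intro AE_I2 impI)
      fix t assume t: "t \<in> K"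
      have "((\<lambda>w. (f w t - f w0 t) / (w - w0)) \<longlongrightarrow> f' w0 t) (at w0)"
        using der[OF t S(2)] unfolding has_field_derivative_iff .
      then have "((\<lambda>w. (f w t - f w0 t) / (w - w0)) \<circ> X) \<longlonglongrightarrow> f' w0 t"
        using X by (subst (asm) tendsto_at_iff_sequentially) auto
      moreover have "eventually (\<lambda>i. ((\<lambda>w. (f w t - f w0 t) / (w - w0)) \<circ> X) i = s i t) sequentially"
        using evS by eventually_elim (simp add: s_def)
      ultimately show "(\<lambda>i. s i t) \<longlonglongrightarrow> f' w0 t" by (rule Lim_transform_eventually)
    qed
    show "AE t in M. norm (s i t) \<le> C" for i
      using K
    proof (rule AE_mp, intro AE_I2 impI)
      fix t assume t: "t \<in> K"
      show "norm (s i t) \<le> C"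
      proof (cases "X i \<in> S")
        case True
        have "norm (f (X i) t - f w0 t) \<le> C * norm (X i - w0)"
          by (rule field_differentiable_bound[OF S(3), where f'="\<lambda>w. f' w t"])
             (use der[OF t] bnd[OF t] True S in \<open>auto intro: has_field_derivative_at_within\<close>)
        moreover have "X i \<noteq> w0" using X(1) by auto
        ultimately show ?thesis using True by (simp add: s_def norm_divide divide_le_eq)
      next
        case False
        have "0 \<le> C" using bnd[OF t S(2)] norm_ge_zero order_trans by blast
        then show ?thesis using False by (simp add: s_def)
      qed
    qed
  qed
  moreover have "eventually (\<lambda>i. integral\<^sup>L M (s i) = ((\<lambda>y. ((LINT t|M. f y t) - (LINT t|M. f w0 t)) / (y - w0)) \<circ> X) i) sequentially"
    using evS
  proof eventually_elim
    case (elim i)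
    have "s i = (\<lambda>t. (f (X i) t - f w0 t) / (X i - w0))" using elim by (intro ext) (simp add: s_def)
    then show ?case
      using int[OF elim] int[OF S(2)] by (simp add: integral_diff integral_divide_zero)
  qed
  ultimately show "((\<lambda>y. ((LINT t|M. f y t) - (LINT t|M. f w0 t)) / (y - w0)) \<circ> X) \<longlonglongrightarrow> (LINT t|M. f' w0 t)"
    by (rule Lim_transform_eventually)
qed

lemma deriv_invpow:
  fixes z c :: "'a::real_normed_field"
  assumes "z - c \<noteq> 0"
  shows "((\<lambda>w. 1/(w - c)^m) has_field_derivative (- of_nat m / (z - c)^Suc m)) (at z)"
proof (cases m)
  case 0 then show ?thesis by simp
next
  case (Suc k)
  have d: "((\<lambda>w. (w - c)^m) has_field_derivative (of_nat m * (1 * (z - c)^(m - Suc 0)))) (at z)"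
    by (intro DERIV_power) (auto intro!: derivative_eq_intros)
  have "((\<lambda>w. inverse ((w - c)^m)) has_field_derivative (- ((of_nat m * (1 * (z - c)^(m - Suc 0))) * inverse (((z-c)^m)^Suc (Suc 0))))) (at z)"
    by (rule DERIV_inverse_fun[OF d]) (use assms in auto)
  moreover have "- ((of_nat m * (1 * (z - c)^(m - Suc 0))) * inverse (((z-c)^m)^Suc (Suc 0))) = - of_nat m / (z - c)^Suc m"
  proof -
    have e: "((z-c)^m)^Suc (Suc 0) = (z-c)^(m - Suc 0) * (z - c)^Suc m"
      unfolding power_mult[symmetric] power_add[symmetric] using Suc by (simp add: algebra_simps)
    show ?thesis unfolding e using assms by (simp add: field_simps)
  qed
  ultimately show ?thesis by (simp add: inverse_eq_divide)
qed

definition Idom :: "real measure \<Rightarrow> 'a::real_normed_algebra_1 set" where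
  "Idom \<mu> = of_real ` {Eminus \<mu>..Eplus \<mu>}"

lemma Idom_compact: "compact (Idom \<mu> :: 'a::real_normed_algebra_1 set)"
  unfolding Idom_def by (intro compact_continuous_image continuous_intros) auto

lemma Idom_ne: "in_M \<mu> \<Longrightarrow> (Idom \<mu> :: 'a::real_normed_algebra_1 set) \<noteq> {}"
  unfolding Idom_def using Eplus_in[of \<mu>] by auto

lemma meas_inM:
  assumes "in_M \<mu>" "g \<in> borel_measurable borel" shows "g \<in> borel_measurable \<mu>"
  using assms inM_basic(2)[OF assms(1)] measurable_cong_sets by blast

lemma kern_lower:
  fixes w w' :: "'a::{real_normed_field}"
  assumes "in_M \<mu>" "w' \<in> ball w (infdist w (Idom \<mu>) / 2)" "t \<in> {Eminus \<mu>..Eplus \<mu>}"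
  shows "infdist w (Idom \<mu>) / 2 \<le> norm (w' - of_real t)"
proof -
  have "of_real t \<in> (Idom \<mu> :: 'a set)" using assms(3) by (auto simp: Idom_def)
  then have "infdist w (Idom \<mu>) \<le> dist w (of_real t)" by (rule infdist_le)
  also have "\<dots> \<le> dist w w' + dist w' (of_real t)" by (rule dist_triangle)
  finally show ?thesis using assms(2) by (auto simp: dist_norm)
qed

lemma kern_meas:
  assumes "in_M \<mu>"
  shows "(\<lambda>t. c / (w - of_real t :: 'a::{real_normed_field,banach,second_countable_topology})^m) \<in> borel_measurable \<mu>"
  by (rule meas_inM[OF assms]) measurable

lemma kern_integrable:
  fixes w :: "'a::{real_normed_field,banach,second_countable_topology}"
  assumes "in_M \<mu>" "w \<notin> Idom \<mu>"
  shows "integrable \<mu> (\<lambda>t. c / (w - of_real t)^m)"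
proof -
  interpret prob_space \<mu> using inM_basic[OF assms(1)] by auto
  have d: "infdist w (Idom \<mu>) > 0"
    using infdist_pos_not_in_closed[OF compact_imp_closed[OF Idom_compact] Idom_ne[OF assms(1)] assms(2)] .
  let ?d = "infdist w (Idom \<mu>) / 2"
  show ?thesis
  proof (rule integrable_const_bound[where B="norm c / ?d^m"])
    show "AE t in \<mu>. norm (c / (w - of_real t)^m) \<le> norm c / ?d^m"
      using AE_supp[OF assms(1)]
    proof (rule AE_mp, intro AE_I2 impI)
      fix t assume t: "Eminus \<mu> \<le> t \<and> t \<le> Eplus \<mu>"
      have l: "?d \<le> norm (w - of_real t)" using kern_lower[OF assms(1), of w w t] t d by auto
      then have "?d^m \<le> norm (w - of_real t)^m" using d by (intro power_mono) auto
      moreover have "0 < ?d^m" using d by simp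
      ultimately show "norm (c / (w - of_real t)^m) \<le> norm c / ?d^m"
        by (simp add: norm_divide norm_power divide_left_mono)
    qed
  qed (rule kern_meas[OF assms(1)])
qed

lemma kern_deriv:
  fixes w :: "'a::{real_normed_field,banach,second_countable_topology}"
  assumes "in_M \<mu>" "w \<notin> Idom \<mu>"
  shows "((\<lambda>w. LINT t|\<mu>. 1 / (w - of_real t)^m) has_field_derivative
           (LINT t|\<mu>. - of_nat m / (w - of_real t)^(Suc m))) (at w)"
proof -
  interpret prob_space \<mu> using inM_basic[OF assms(1)] by auto
  have d: "infdist w (Idom \<mu>) > 0"
    using infdist_pos_not_in_closed[OF compact_imp_closed[OF Idom_compact] Idom_ne[OF assms(1)] assms(2)] .
  let ?d = "infdist w (Idom \<mu>) / 2"
  have nz: "w' - of_real t \<noteq> 0" if "w' \<in> ball w ?d" "t \<in> {Eminus \<mu>..Eplus \<mu>}" for w' t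
    using kern_lower[OF assms(1) that] d by auto
  have notin: "w' \<notin> Idom \<mu>" if "w' \<in> ball w ?d" for w'
  proof
    assume "w' \<in> Idom \<mu>"
    then obtain t where "t \<in> {Eminus \<mu>..Eplus \<mu>}" "w' = of_real t" by (auto simp: Idom_def)
    then show False using nz[OF that] by auto
  qed
  show ?thesis
  proof (rule deriv_under_integral[where K="{Eminus \<mu>..Eplus \<mu>}" and S="ball w ?d" and C="of_nat m / ?d^(Suc m)"])
    show "finite_measure \<mu>" by unfold_locales
    show "AE t in \<mu>. t \<in> {Eminus \<mu>..Eplus \<mu>}" using AE_supp[OF assms(1)] by auto
    show "open (ball w ?d)" "w \<in> ball w ?d" "convex (ball w ?d)" using d by auto
    fix t w' assume t: "t \<in> {Eminus \<mu>..Eplus \<mu>}" and w': "w' \<in> ball w ?d"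
    have nz': "w' - of_real t \<noteq> 0" using nz[OF w' t] .
    show "((\<lambda>w. 1 / (w - of_real t)^m) has_field_derivative (- of_nat m / (w' - of_real t)^(Suc m))) (at w')"
      by (rule deriv_invpow[OF nz'])
    have l: "?d \<le> norm (w' - of_real t)" using kern_lower[OF assms(1) w' t] .
    then have "?d^Suc m \<le> norm (w' - of_real t)^Suc m" using d by (intro power_mono) auto
    moreover have "0 < ?d^Suc m" using d by (simp del: power_Suc)
    ultimately show "norm (- of_nat m / (w' - of_real t)^(Suc m)) \<le> of_nat m / ?d^(Suc m)"
      by (simp add: norm_divide norm_power divide_left_mono del: power_Suc)
  next
    show "(\<lambda>t. 1 / (w' - of_real t)^m) \<in> borel_measurable \<mu>" for w' :: 'a by (rule kern_meas[OF assms(1)])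
    show "(\<lambda>t. - of_nat m / (w - of_real t)^Suc m) \<in> borel_measurable \<mu>" by (rule kern_meas[OF assms(1)])
    show "integrable \<mu> (\<lambda>t. 1 / (w' - of_real t)^m)" if "w' \<in> ball w ?d" for w'
      by (rule kern_integrable[OF assms(1) notin[OF that]])
  qed
qed

definition CT :: "real measure \<Rightarrow> nat \<Rightarrow> 'a::{real_normed_field,banach,second_countable_topology} \<Rightarrow> 'a" where
  "CT \<mu> m w = (LINT t|\<mu>. 1 / (w - of_real t)^m)"

lemma CT_deriv:
  fixes w :: "'a::{real_normed_field,banach,second_countable_topology}"
  assumes "in_M \<mu>" "w \<notin> Idom \<mu>"
  shows "(CT \<mu> m has_field_derivative (- of_nat m * CT \<mu> (Suc m) w)) (at w)"
proof -
  have h: "(\<lambda>t. - of_nat m / (w - of_real t)^(Suc m)) = (\<lambda>t. (- of_nat m) * (1 / (w - of_real t)^(Suc m)))"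
    by (simp add: field_simps)
  have "(LINT t|\<mu>. - of_nat m / (w - of_real t)^(Suc m)) = - of_nat m * CT \<mu> (Suc m) w"
    unfolding CT_def h by (rule integral_mult_right_zero)
  with kern_deriv[OF assms, of m] show ?thesis unfolding CT_def[abs_def] by simp
qed

lemma CT_integrable:
  fixes w :: "'a::{real_normed_field,banach,second_countable_topology}"
  assumes "in_M \<mu>" "w \<notin> Idom \<mu>"
  shows "integrable \<mu> (\<lambda>t. 1 / (w - of_real t)^m)"
  using kern_integrable[OF assms, of 1 m] by simp

lemma Idom_real: "x > Eplus \<mu> \<Longrightarrow> (of_real x :: 'a::real_normed_algebra_1) \<notin> Idom \<mu>"
  by (auto simp: Idom_def)

lemma Idom_real': "x > Eplus \<mu> \<Longrightarrow> (x::real) \<notin> Idom \<mu>"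
  by (auto simp: Idom_def)

lemma Idom_open: "open (- (Idom \<mu> :: 'a::{real_normed_algebra_1} set))"
  by (rule open_Compl[OF compact_imp_closed[OF Idom_compact]])

lemma CT_complex_of_real: "CT \<mu> m (complex_of_real x) = complex_of_real (CT \<mu> m x)"
proof -
  have h: "(\<lambda>t. 1 / (complex_of_real x - complex_of_real t)^m) = (\<lambda>t. complex_of_real (1 / (x - t)^m))"
    by (simp add: of_real_diff[symmetric] del: of_real_diff)
  show ?thesis unfolding CT_def h of_real_eq_id id_def by (rule integral_complex_of_real)
qed

lemma CT_holo: "in_M \<mu> \<Longrightarrow> (CT \<mu> m :: complex \<Rightarrow> complex) holomorphic_on (- Idom \<mu>)"
  using CT_deriv by (subst holomorphic_on_open[OF Idom_open]) blast

lemma Gr_CT: "Gr \<mu> x = CT \<mu> 1 x"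
  by (simp add: Gr_def CT_def)

lemma Gr_eq_CT: "Gr \<mu> = CT \<mu> 1"
  by (rule ext) (simp add: Gr_CT)

lemma CT_bounds:
  assumes "in_M \<mu>" "x > Eplus \<mu>"
  shows "1 / (x - Eminus \<mu>)^m \<le> CT \<mu> m x" "CT \<mu> m x \<le> 1 / (x - Eplus \<mu>)^m"
proof -
  interpret prob_space \<mu> using inM_basic[OF assms(1)] by auto
  have le: "Eminus \<mu> \<le> Eplus \<mu>" using Eplus_in[OF assms(1)] by auto
  have int: "integrable \<mu> (\<lambda>t. 1 / (x - t)^m)" using CT_integrable[OF assms(1) Idom_real'[OF assms(2)], of m] by simp
  have "(LINT t|\<mu>. 1 / (x - Eminus \<mu>)^m) \<le> CT \<mu> m x" unfolding CT_def
  proof (rule integral_mono_AE[OF _ ])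
    show "AE t in \<mu>. 1 / (x - Eminus \<mu>)^m \<le> 1 / (x - of_real t)^m"
      using AE_supp[OF assms(1)]
    proof (rule AE_mp, intro AE_I2 impI)
      fix t assume t: "Eminus \<mu> \<le> t \<and> t \<le> Eplus \<mu>"
      then have "(x - t)^m \<le> (x - Eminus \<mu>)^m" "0 < (x-t)^m" using assms(2) by (auto intro!: power_mono)
      then show "1 / (x - Eminus \<mu>)^m \<le> 1 / (x - of_real t)^m" by (simp add: frac_le)
    qed
  qed (use int in auto)
  then show "1 / (x - Eminus \<mu>)^m \<le> CT \<mu> m x" by (simp add: prob_space)
  have "CT \<mu> m x \<le> (LINT t|\<mu>. 1 / (x - Eplus \<mu>)^m)" unfolding CT_def
  proof (rule integral_mono_AE[OF _ ])
    show "AE t in \<mu>. 1 / (x - of_real t)^m \<le> 1 / (x - Eplus \<mu>)^m"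
      using AE_supp[OF assms(1)]
    proof (rule AE_mp, intro AE_I2 impI)
      fix t assume t: "Eminus \<mu> \<le> t \<and> t \<le> Eplus \<mu>"
      then have "(x - Eplus \<mu>)^m \<le> (x - t)^m" "0 < (x-Eplus \<mu>)^m" using assms(2) by (auto intro!: power_mono)
      then show "1 / (x - of_real t)^m \<le> 1 / (x - Eplus \<mu>)^m" by (simp add: frac_le)
    qed
  qed (use int in auto)
  then show "CT \<mu> m x \<le> 1 / (x - Eplus \<mu>)^m" by (simp add: prob_space)
qed

lemma CT_pos:
  assumes "in_M \<mu>" "x > Eplus \<mu>"
  shows "CT \<mu> m x > 0"
proof -
  have "Eminus \<mu> \<le> Eplus \<mu>" using Eplus_in[OF assms(1)] by auto
  then have "0 < 1 / (x - Eminus \<mu>)^m" using assms by simp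
  then show ?thesis using CT_bounds(1)[OF assms, of m] by linarith
qed

lemma integral_lin3:
  fixes f g h :: "real \<Rightarrow> real"
  assumes "integrable M f" "integrable M g" "integrable M h"
  shows "(LINT t|M. f t - c * g t + d * h t) = (LINT t|M. f t) - c * (LINT t|M. g t) + d * (LINT t|M. h t)"
proof -
  have "(LINT t|M. f t - c * g t + d * h t) = (LINT t|M. f t - c * g t) + (LINT t|M. d * h t)"
    by (rule Bochner_Integration.integral_add) (use assms in auto)
  also have "(LINT t|M. f t - c * g t) = (LINT t|M. f t) - (LINT t|M. c * g t)"
    by (rule Bochner_Integration.integral_diff) (use assms in auto)
  finally show ?thesis by simp
qed

lemma CT_int_real:
  assumes "in_M \<mu>" "x > Eplus \<mu>"
  shows "integrable \<mu> (\<lambda>t. 1 / (x - t)^m)" "integrable \<mu> (\<lambda>t. 1 / (x - t))"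
  using CT_integrable[OF assms(1) Idom_real'[OF assms(2)], of m] CT_integrable[OF assms(1) Idom_real'[OF assms(2)], of 1]
  by simp_all

lemma CT_real_def: "CT \<mu> m (x::real) = (LINT t|\<mu>. 1 / (x - t)^m)"
  by (simp add: CT_def)

lemma AE_pos:
  assumes "in_M \<mu>" "x > Eplus \<mu>"
  shows "AE t in \<mu>. 0 < x - t"
  using AE_supp[OF assms(1)] by (rule AE_mp) (use assms in auto)

lemma not_const_AE:
  assumes "in_M \<mu>" "\<not> (\<exists>a. \<mu> = return borel a)" "x > Eplus \<mu>" "c > 0"
    "AE t in \<mu>. 1 / (x - t) = c"
  shows False
proof -
  have "AE t in \<mu>. t = x - 1/c"
    using assms(5) AE_pos[OF assms(1,3)] by eventually_elim (use assms(4) in \<open>auto simp: field_simps\<close>)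
  then show False using AE_point_return[OF assms(1)] assms(2) by blast
qed

lemma CS1:
  assumes "in_M \<mu>" "\<not> (\<exists>a. \<mu> = return borel a)" "x > Eplus \<mu>"
  shows "(CT \<mu> 1 x)^2 < CT \<mu> 2 x"
proof -
  interpret prob_space \<mu> using inM_basic[OF assms(1)] by auto
  define a where "a = CT \<mu> 1 x"
  have a: "a > 0" unfolding a_def by (rule CT_pos[OF assms(1,3)])
  have i1: "integrable \<mu> (\<lambda>t. 1 / (x - t))" and i2: "integrable \<mu> (\<lambda>t. 1 / (x - t)^2)"
    using CT_int_real[OF assms(1,3)] by auto
  have eq: "(\<lambda>t. (1 / (x - t) - a)^2) = (\<lambda>t. 1 / (x - t)^2 - (2*a) * (1 / (x - t)) + a^2)"
    by (rule ext) (simp only: power_one_over[symmetric], simp add: power2_eq_square algebra_simps)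
  have iq: "integrable \<mu> (\<lambda>t. (1 / (x - t) - a)^2)" unfolding eq
    by (intro Bochner_Integration.integrable_add Bochner_Integration.integrable_diff integrable_mult_right i1 i2 integrable_const)
  have I: "(LINT t|\<mu>. (1 / (x - t) - a)^2) = CT \<mu> 2 x - a^2"
  proof -
    have "(LINT t|\<mu>. 1 / (x - t)^2 - (2*a) * (1 / (x - t)) + a^2 * 1) = CT \<mu> 2 x - (2*a) * a + a^2 * (LINT t|\<mu>. 1)"
      unfolding CT_real_def a_def power_one_right by (rule integral_lin3[OF i2 i1]) simp
    moreover have "(LINT t|\<mu>. (1::real)) = 1" by (simp add: prob_space)
    ultimately show ?thesis unfolding eq by (simp add: power2_eq_square)
  qed
  have "(LINT t|\<mu>. (1 / (x - t) - a)^2) \<noteq> 0"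
  proof
    assume "(LINT t|\<mu>. (1 / (x - t) - a)^2) = 0"
    then have "AE t in \<mu>. (1 / (x - t) - a)^2 = 0"
      using integral_nonneg_eq_0_iff_AE[OF iq] by auto
    then have "AE t in \<mu>. 1 / (x - t) = a" by eventually_elim simp
    then show False using not_const_AE[OF assms(1,2,3) a] by blast
  qed
  moreover have "(LINT t|\<mu>. (1 / (x - t) - a)^2) \<ge> 0" by (rule integral_nonneg_AE) simp
  ultimately show ?thesis using I unfolding a_def by linarith
qed

lemma CS2:
  assumes "in_M \<mu>" "\<not> (\<exists>a. \<mu> = return borel a)" "x > Eplus \<mu>"
  shows "(CT \<mu> 2 x)^2 < CT \<mu> 1 x * CT \<mu> 3 x"
proof -
  interpret prob_space \<mu> using inM_basic[OF assms(1)] by auto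
  define a where "a = CT \<mu> 1 x"
  define b where "b = CT \<mu> 2 x"
  define l where "l = b / a"
  have a: "a > 0" unfolding a_def by (rule CT_pos[OF assms(1,3)])
  have b: "b > 0" unfolding b_def by (rule CT_pos[OF assms(1,3)])
  have l: "l > 0" unfolding l_def using a b by simp
  have i1: "integrable \<mu> (\<lambda>t. 1 / (x - t))" and i2: "integrable \<mu> (\<lambda>t. 1 / (x - t)^2)"
    and i3: "integrable \<mu> (\<lambda>t. 1 / (x - t)^3)"
    using CT_int_real[OF assms(1,3)] by auto
  have eq: "(\<lambda>t. (1 / (x - t)) * (1 / (x - t) - l)^2) = (\<lambda>t. 1 / (x - t)^3 - (2*l) * (1 / (x - t)^2) + l^2 * (1 / (x - t)))"
    by (rule ext) (simp only: power_one_over[symmetric], simp add: power2_eq_square power3_eq_cube algebra_simps)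
  have iq: "integrable \<mu> (\<lambda>t. (1 / (x - t)) * (1 / (x - t) - l)^2)" unfolding eq
    by (intro Bochner_Integration.integrable_add Bochner_Integration.integrable_diff integrable_mult_right i1 i2 i3)
  have I: "(LINT t|\<mu>. (1 / (x - t)) * (1 / (x - t) - l)^2) = CT \<mu> 3 x - 2 * l * b + l^2 * a"
    unfolding eq CT_real_def a_def b_def power_one_right by (rule integral_lin3[OF i3 i2 i1])
  have "(LINT t|\<mu>. (1 / (x - t)) * (1 / (x - t) - l)^2) \<noteq> 0"
  proof
    assume "(LINT t|\<mu>. (1 / (x - t)) * (1 / (x - t) - l)^2) = 0"
    moreover have "AE t in \<mu>. 0 \<le> (1 / (x - t)) * (1 / (x - t) - l)^2"
      using AE_pos[OF assms(1,3)] by eventually_elim simp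
    ultimately have "AE t in \<mu>. (1 / (x - t)) * (1 / (x - t) - l)^2 = 0"
      using integral_nonneg_eq_0_iff_AE[OF iq] by auto
    then have "AE t in \<mu>. 1 / (x - t) = l" using AE_pos[OF assms(1,3)] by eventually_elim simp
    then show False using not_const_AE[OF assms(1,2,3) l] by blast
  qed
  moreover have "(LINT t|\<mu>. (1 / (x - t)) * (1 / (x - t) - l)^2) \<ge> 0"
    by (rule integral_nonneg_AE) (use AE_pos[OF assms(1,3)] in \<open>eventually_elim, simp\<close>)
  ultimately have "CT \<mu> 3 x - 2 * l * b + l^2 * a > 0" using I by simp
  then have "a * (CT \<mu> 3 x - 2 * l * b + l^2 * a) > 0" using a by simp
  moreover have "a * (CT \<mu> 3 x - 2 * l * b + l^2 * a) = a * CT \<mu> 3 x - b^2"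
    using a by (simp add: l_def field_simps power2_eq_square)
  ultimately show ?thesis by (simp add: a_def b_def mult.commute)
qed

lemma Em_lt_Ep:
  assumes "in_M \<mu>" "\<not> (\<exists>a. \<mu> = return borel a)"
  shows "Eminus \<mu> < Eplus \<mu>"
proof (rule ccontr)
  assume "\<not> Eminus \<mu> < Eplus \<mu>"
  then have "AE t in \<mu>. t = Eplus \<mu>" using AE_supp[OF assms(1)] by (rule_tac AE_mp) auto
  then show False using AE_point_return[OF assms(1)] assms(2) by blast
qed

lemma CT_real_deriv:
  assumes "in_M \<mu>" "x > Eplus \<mu>"
  shows "(CT \<mu> m has_real_derivative (- real m * CT \<mu> (Suc m) x)) (at x)"
  using CT_deriv[OF assms(1) Idom_real'[OF assms(2)], of m] by simp

lemma CT_real_cont: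
  assumes "in_M \<mu>" "x > Eplus \<mu>"
  shows "isCont (CT \<mu> m :: real \<Rightarrow> real) x"
  using CT_real_deriv[OF assms] DERIV_isCont by blast

lemma CT_real_cont_on:
  assumes "in_M \<mu>" 
  shows "continuous_on {Eplus \<mu> <..} (CT \<mu> m :: real \<Rightarrow> real)"
  using CT_real_cont[OF assms] by (intro continuous_at_imp_continuous_on) auto

lemma CT_strict_dec:
  assumes "in_M \<mu>" "Eplus \<mu> < x" "x < y"
  shows "CT \<mu> (Suc m) y < CT \<mu> (Suc m) (x::real)"
proof (rule DERIV_neg_imp_decreasing[OF assms(3)])
  fix z assume "x \<le> z" "z \<le> y"
  then have z: "z > Eplus \<mu>" using assms by auto
  show "\<exists>D. (CT \<mu> (Suc m) has_real_derivative D) (at z) \<and> D < 0"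
    using CT_real_deriv[OF assms(1) z, of "Suc m"] CT_pos[OF assms(1) z, of "Suc (Suc m)"]
    by (intro exI[of _ "- real (Suc m) * CT \<mu> (Suc (Suc m)) z"] conjI) (assumption, rule mult_neg_pos, simp_all del: of_nat_Suc)
qed

lemma CT_tendsto_0:
  assumes "in_M \<mu>"
  shows "((CT \<mu> (Suc m) :: real \<Rightarrow> real) \<longlongrightarrow> 0) at_top"
proof (rule tendsto_sandwich[where f="\<lambda>_. 0" and h="\<lambda>x. 1 / (x - Eplus \<mu>)^Suc m"])
  show "eventually (\<lambda>x. 0 \<le> (CT \<mu> (Suc m) :: real \<Rightarrow> real) x) at_top"
    using eventually_gt_at_top[of "Eplus \<mu>"] by eventually_elim (use CT_pos[OF assms] in \<open>auto intro: less_imp_le\<close>)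
  show "eventually (\<lambda>x. (CT \<mu> (Suc m) :: real \<Rightarrow> real) x \<le> 1 / (x - Eplus \<mu>)^Suc m) at_top"
    using eventually_gt_at_top[of "Eplus \<mu>"] by eventually_elim (metis CT_bounds(2) assms)
  show "((\<lambda>x. 1 / (x - Eplus \<mu>)^Suc m) \<longlongrightarrow> 0) at_top" by real_asymp
qed simp

lemma dec_ereal_tendsto:
  fixes f :: "real \<Rightarrow> real"
  assumes dec: "\<And>x y. c < x \<Longrightarrow> x < y \<Longrightarrow> f y \<le> f x"
  shows "((\<lambda>x. ereal (f x)) \<longlongrightarrow> (SUP x\<in>{c<..}. ereal (f x))) (at_right c)"
proof (rule order_tendstoI)
  fix a assume "a < (SUP x\<in>{c<..}. ereal (f x))"
  then obtain x0 where x0: "x0 > c" "a < ereal (f x0)" by (auto simp: less_SUP_iff)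
  show "eventually (\<lambda>x. a < ereal (f x)) (at_right c)"
    unfolding eventually_at_right_field
    by (rule exI[of _ x0]) (use x0 dec in \<open>auto intro: less_le_trans\<close>)
next
  fix a assume a: "(SUP x\<in>{c<..}. ereal (f x)) < a"
  show "eventually (\<lambda>x. ereal (f x) < a) (at_right c)"
    unfolding eventually_at_right_field
  proof (rule exI[of _ "c+1"], intro conjI allI impI)
    fix y assume "c < y" "y < c + 1"
    then have "ereal (f y) \<le> (SUP x\<in>{c<..}. ereal (f x))" by (intro SUP_upper) auto
    then show "ereal (f y) < a" using a by auto
  qed simp
qed

locale Ms =
  fixes \<mu> :: "real measure" and n :: nat
  assumes inM: "in_M \<mu>" and npm: "\<not> (\<exists>a. \<mu> = return borel a)" and n1: "n \<ge> 1" and ntau: "real n \<ge> tau \<mu>"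
begin

abbreviation "Ep \<equiv> Eplus \<mu>"
abbreviation "Em \<equiv> Eminus \<mu>"
abbreviation G :: "real \<Rightarrow> real" where "G \<equiv> CT \<mu> 1"
abbreviation G2 :: "real \<Rightarrow> real" where "G2 \<equiv> CT \<mu> 2"
abbreviation G3 :: "real \<Rightarrow> real" where "G3 \<equiv> CT \<mu> 3"

definition p :: "real \<Rightarrow> real" where "p y = real n * (G y)^2 - (real n - 1) * G2 y"

lemma EmEp: "Em < Ep" by (rule Em_lt_Ep[OF inM npm])

lemma xpt_gt: "xpt \<mu> > Ep" using EmEp by (simp add: xpt_def)

lemma G_pos: "y > Ep \<Longrightarrow> G y > 0" and G2_pos: "y > Ep \<Longrightarrow> G2 y > 0" and G3_pos: "y > Ep \<Longrightarrow> G3 y > 0"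
  using CT_pos[OF inM] by auto

lemma G_deriv: "y > Ep \<Longrightarrow> (G has_real_derivative - G2 y) (at y)"
  using CT_real_deriv[OF inM, of y 1] by (simp add: numeral_2_eq_2)

lemma G2_deriv: "y > Ep \<Longrightarrow> (G2 has_real_derivative - 2 * G3 y) (at y)"
  using CT_real_deriv[OF inM, of y 2] by (simp add: numeral_3_eq_3 numeral_2_eq_2)

lemma G_dec: "Ep < x \<Longrightarrow> x < y \<Longrightarrow> G y < G x"
  using CT_strict_dec[OF inM, of x y 0] by simp

lemma G_cont: "y > Ep \<Longrightarrow> isCont G y" and G2_cont: "y > Ep \<Longrightarrow> isCont G2 y"
  using CT_real_cont[OF inM] by auto

lemma p_cont: "y > Ep \<Longrightarrow> isCont p y"
  unfolding p_def[abs_def] using G_cont G2_cont by (auto intro!: continuous_intros)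

lemma p_xpt: "p (xpt \<mu>) \<le> 0"
proof -
  let ?x = "xpt \<mu>"
  have x: "?x > Ep" by (rule xpt_gt)
  have d: "deriv (Gr \<mu>) ?x = - G2 ?x" unfolding Gr_eq_CT using G_deriv[OF x] by (rule DERIV_imp_deriv)
  have cs: "(G ?x)^2 < G2 ?x" using CS1[OF inM npm x] by simp
  have g2: "G2 ?x > 0" by (rule G2_pos[OF x])
  define q where "q = 1 - (G ?x)^2 / G2 ?x"
  have q: "q > 0" unfolding q_def using cs g2 by (simp add: field_simps)
  have "tau \<mu> = inverse q" unfolding tau_def q_def d by (simp add: Gr_CT)
  then have "real n \<ge> inverse q" using ntau by simp
  then have "real n * q \<ge> 1" using q by (simp add: field_simps)
  then have "real n * (G2 ?x - (G ?x)^2) \<ge> G2 ?x" using g2 unfolding q_def by (simp add: field_simps)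
  then show ?thesis unfolding p_def by (simp add: algebra_simps)
qed

lemma p_pos_large: "y \<ge> Ep + 2 * real n * (Ep - Em) + 1 \<Longrightarrow> p y > 0"
proof -
  assume y: "y \<ge> Ep + 2 * real n * (Ep - Em) + 1"
  define d where "d = Ep - Em"
  define u where "u = y - Ep"
  have d: "d > 0" using EmEp by (simp add: d_def)
  have n0: "real n \<ge> 1" using n1 by simp
  have u: "u \<ge> 2 * real n * d + 1" using y by (simp add: u_def d_def)
  have u0: "u > 0" using u d n0 by (smt (verit) mult_nonneg_nonneg)
  have yEp: "y > Ep" using u0 by (simp add: u_def)
  have key: "real n * u^2 > (real n - 1) * (u + d)^2"
  proof -
    have ug: "u \<ge> 2 * real n * d" using u by simp
    have h1: "u * u \<ge> u * (2 * real n * d + 1)" using u u0 by (intro mult_left_mono) auto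
    have h2: "d * u \<ge> d * (2 * real n * d)" using ug d by (intro mult_left_mono) auto
    have h3: "real n * (d * d) \<ge> 0" by simp
    have e1: "(real n - 1) * (u + d)^2 = real n * (u*u) + 2 * (real n * (d * u)) + real n * (d*d) - u*u - 2*(d*u) - d*d"
      by (simp add: power2_eq_square algebra_simps)
    have e2: "u * (2 * real n * d + 1) = 2 * (real n * (d * u)) + u" by (simp add: algebra_simps)
    have e3: "d * (2 * real n * d) = 2 * (real n * (d * d))" by (simp add: algebra_simps)
    have "d * d > 0" using d by simp
    then show ?thesis unfolding e1 using h1 h2 h3 u0 unfolding e2 e3 by (simp only: power2_eq_square)
  qed
  have b1: "G y \<ge> 1 / (u + d)" using CT_bounds(1)[OF inM yEp, of 1] by (simp add: u_def d_def)
  have b2: "G2 y \<le> 1 / u^2" using CT_bounds(2)[OF inM yEp, of 2] by (simp add: u_def)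
  have ud: "u + d > 0" using u0 d by simp
  have "(G y)^2 \<ge> (1 / (u + d))^2" using b1 ud by (intro power_mono) auto
  then have "(G y)^2 \<ge> 1 / (u+d)^2" by (simp add: power_one_over)
  then have "real n * (G y)^2 \<ge> real n * (1 / (u+d)^2)" by (rule mult_left_mono) simp
  then have "real n * (G y)^2 \<ge> real n / (u+d)^2" by simp
  moreover have "(real n - 1) * G2 y \<le> (real n - 1) * (1 / u^2)" using b2 n0 by (intro mult_left_mono) auto
  moreover have "real n / (u+d)^2 > (real n - 1) * (1 / u^2)"
    using key u0 ud by (simp add: field_simps)
  ultimately show "p y > 0" unfolding p_def by linarith
qed

end

context Ms begin

definition Ymax :: real where "Ymax = max (Ep + 2 * real n * (Ep - Em) + 1) (xpt \<mu>)"
definition Sset :: "real set" where "Sset = {y \<in> {xpt \<mu>..Ymax}. p y \<le> 0}"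
definition ys :: real where "ys = Sup Sset"

lemma p_cont_on: "continuous_on {xpt \<mu>..Ymax} p"
  using p_cont xpt_gt by (intro continuous_at_imp_continuous_on) auto

lemma Sset_props: "Sset \<noteq> {}" "bdd_above Sset" "closed Sset"
proof -
  have "xpt \<mu> \<in> Sset" using p_xpt by (simp add: Sset_def Ymax_def)
  then show "Sset \<noteq> {}" by auto
  show "bdd_above Sset" unfolding Sset_def by (rule bdd_aboveI[of _ Ymax]) auto
  show "closed Sset" unfolding Sset_def
    using continuous_on_closed_Collect_le[OF p_cont_on continuous_on_const[of _ 0]] by simp
qed

lemma ys_in: "ys \<in> Sset" unfolding ys_def using Sset_props by (rule closed_contains_Sup)

lemma ys_ge: "ys \<ge> xpt \<mu>" using ys_in by (auto simp: Sset_def)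

lemma ys_gt: "ys > Ep" using ys_ge xpt_gt by simp

lemma p_after: "y > ys \<Longrightarrow> p y > 0"
proof -
  assume y: "y > ys"
  show "p y > 0"
  proof (cases "y \<le> Ymax")
    case True
    have "y \<notin> Sset"
    proof
      assume "y \<in> Sset" then have "y \<le> ys" unfolding ys_def using Sset_props by (intro cSup_upper) auto
      then show False using y by simp
    qed
    then show ?thesis using True y ys_ge by (auto simp: Sset_def)
  next
    case False
    then show ?thesis by (intro p_pos_large) (auto simp: Ymax_def)
  qed
qed

lemma p_ys: "p ys = 0"
proof -
  have "p ys \<le> 0" using ys_in by (simp add: Sset_def)
  moreover have "p ys \<ge> 0"
  proof (rule tendsto_lowerbound)
    show "(p \<longlongrightarrow> p ys) (at_right ys)"
      using p_cont[OF ys_gt] by (simp add: isCont_def filterlim_at_split)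
    show "eventually (\<lambda>y. 0 \<le> p y) (at_right ys)"
      unfolding eventually_at_right_field using p_after by (intro exI[of _ "ys+1"]) (auto intro: less_imp_le)
  qed simp
  ultimately show ?thesis by simp
qed

lemma G_inj_eq: "x > Ep \<Longrightarrow> y > Ep \<Longrightarrow> G x = G y \<Longrightarrow> x = y"
  using G_dec by (metis less_irrefl linorder_neqE_linordered_idom)

lemma Ginv_G: "y > Ep \<Longrightarrow> Ginv \<mu> (G y) = y"
  unfolding Ginv_def Gr_eq_CT by (rule the_equality) (auto intro: G_inj_eq)

lemma G_surj: 
  assumes "y1 > Ep" "0 < u" "u \<le> G y1"
  shows "\<exists>y\<ge>y1. G y = u"
proof -
  have "eventually (\<lambda>x. G x < u) at_top"
    using CT_tendsto_0[OF inM, of 0] assms(2) by (simp add: order_tendsto_iff)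
  then obtain b where b: "\<And>x. x \<ge> b \<Longrightarrow> G x < u" by (auto simp: eventually_at_top_linorder)
  define b' where "b' = max b y1"
  have "G b' \<le> u" using b[of b'] by (simp add: b'_def)
  then obtain x where "x \<ge> y1" "x \<le> b'" "G x = u"
    using IVT2[of G b' u y1] assms G_cont by (auto simp: b'_def)
  then show ?thesis by blast
qed

lemma G_surj2:
  assumes "Ep < y1" "y1 < y2" "G y2 < u" "u < G y1"
  shows "\<exists>y. y1 < y \<and> y < y2 \<and> G y = u"
proof -
  obtain x where "x \<ge> y1" "x \<le> y2" "G x = u"
    using IVT2[of G y2 u y1] assms G_cont by force
  then show ?thesis using assms by (metis less_eq_real_def less_irrefl)
qed

lemma G_Ginv: "y > Ep \<Longrightarrow> G (Ginv \<mu> (G y)) = G y"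
  by (metis Ginv_G)

lemma Ginv_cont: "y > Ep \<Longrightarrow> isCont (Ginv \<mu>) (G y)"
proof -
  assume y: "y > Ep"
  show ?thesis
  proof (rule isCont_inverse_function[where d="(y - Ep)/2" and f=G and x=y])
    show "0 < (y - Ep)/2" using y by simp
    fix z assume "\<bar>z - y\<bar> \<le> (y - Ep) / 2"
    then have z: "z > Ep" using y by (auto simp: abs_if split: if_splits)
    show "Ginv \<mu> (G z) = z" by (rule Ginv_G[OF z])
    show "isCont G z" by (rule G_cont[OF z])
  qed
qed

lemma Ginv_deriv:
  assumes y: "y > Ep"
  shows "(Ginv \<mu> has_real_derivative inverse (- G2 y)) (at (G y))"
proof -
  define a where "a = (Ep + y) / 2"
  have a: "Ep < a" "a < y" using y by (auto simp: a_def)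
  have "(G has_real_derivative - G2 y) (at (Ginv \<mu> (G y)))" using G_deriv[OF y] Ginv_G[OF y] by simp
  then show ?thesis
  proof (rule DERIV_inverse_function[where a="G (y+1)" and b="G a"])
    show "- G2 y \<noteq> 0" using G2_pos[OF y] by simp
    show "G (y + 1) < G y" "G y < G a" using G_dec a y by auto
    fix u assume u: "G (y + 1) < u" "u < G a"
    then obtain x where "a < x" "x < y + 1" "G x = u" using G_surj2[of a "y+1" u] a y by auto
    then show "G (Ginv \<mu> u) = u" using Ginv_G[of x] a by auto
  next
    show "isCont (Ginv \<mu>) (G y)" by (rule Ginv_cont[OF y])
  qed
qed

end

context Ms begin

definition zz :: real where "zz = G ys"

lemma zz_pos: "zz > 0" unfolding zz_def using G_pos ys_gt by simp

lemma Ginv_zz: "Ginv \<mu> zz = ys" unfolding zz_def using Ginv_G ys_gt by simp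

lemma Afun_deriv_at:
  assumes y: "y > Ep"
  shows "(Afun \<mu> n has_real_derivative (real n * inverse (- G2 y) - (1 - real n) / (G y)^2)) (at (G y))"
proof -
  have g: "G y \<noteq> 0" using G_pos[OF y] by simp
  have "((\<lambda>u. real n * Ginv \<mu> u + (1 - real n) / u) has_real_derivative
          (real n * inverse (- G2 y) + (- ((1 - real n) * inverse ((G y)^2))))) (at (G y))"
  proof (intro DERIV_add DERIV_cmult Ginv_deriv[OF y])
    show "((\<lambda>u. (1 - real n) / u) has_real_derivative (- ((1 - real n) * inverse ((G y)^2)))) (at (G y))"
      using DERIV_cmult[OF DERIV_inverse[OF g], of "1 - real n"] by (simp add: divide_inverse power2_eq_square)
  qed
  then show ?thesis unfolding Afun_def[abs_def] by (simp add: divide_inverse)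
qed

lemma Afun_deriv:
  assumes y: "y > Ep"
  shows "deriv (Afun \<mu> n) (G y) = - p y / (G2 y * (G y)^2)"
proof -
  have "deriv (Afun \<mu> n) (G y) = real n * inverse (- G2 y) - (1 - real n) / (G y)^2"
    by (rule DERIV_imp_deriv[OF Afun_deriv_at[OF y]])
  also have "\<dots> = - p y / (G2 y * (G y)^2)"
    using G_pos[OF y] G2_pos[OF y] unfolding p_def by (simp add: field_simps)
  finally show ?thesis .
qed

lemma Afun_crit: "deriv (Afun \<mu> n) zz = 0"
  unfolding zz_def using Afun_deriv[OF ys_gt] p_ys by simp

lemma Afun_noncrit: "0 < w \<Longrightarrow> w < zz \<Longrightarrow> deriv (Afun \<mu> n) w \<noteq> 0"
proof -
  assume w: "0 < w" "w < zz"
  then obtain y where y: "y \<ge> ys" "G y = w" using G_surj[OF ys_gt, of w] by (auto simp: zz_def)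
  then have "y \<noteq> ys" using w by (auto simp: zz_def)
  then have y': "y > ys" using y by simp
  then have yE: "y > Ep" using ys_gt by simp
  have "deriv (Afun \<mu> n) w = - p y / (G2 y * (G y)^2)" using Afun_deriv[OF yE] y by simp
  moreover have "p y > 0" by (rule p_after[OF y'])
  ultimately show ?thesis using G_pos[OF yE] G2_pos[OF yE] by simp
qed

definition D :: "real \<Rightarrow> real" where
  "D u = real n * inverse (- G2 (Ginv \<mu> u)) - (1 - real n) / u^2"

lemma Afun_deriv_D: "y > Ep \<Longrightarrow> deriv (Afun \<mu> n) (G y) = D (G y)"
  unfolding D_def using DERIV_imp_deriv[OF Afun_deriv_at] Ginv_G by simp

lemma D_deriv: "(D has_real_derivative
   (real n * (- ((- ((- 2 * G3 ys) * inverse (- G2 ys))) * inverse ((- G2 ys)^2))) - (- ((1 - real n) * (2 * zz) / (zz^2)^2)))) (at zz)"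
proof -
  have zE: "Ginv \<mu> zz = ys" by (rule Ginv_zz)
  have h1: "(Ginv \<mu> has_real_derivative inverse (- G2 ys)) (at zz)"
    unfolding zz_def by (rule Ginv_deriv[OF ys_gt])
  have h2: "(G2 has_real_derivative - 2 * G3 ys) (at (Ginv \<mu> zz))"
    unfolding zE by (rule G2_deriv[OF ys_gt])
  have h3: "((\<lambda>u. G2 (Ginv \<mu> u)) has_real_derivative (- 2 * G3 ys) * inverse (- G2 ys)) (at zz)"
    by (rule DERIV_chain2[OF h2 h1])
  have h4: "((\<lambda>u. - G2 (Ginv \<mu> u)) has_real_derivative - ((- 2 * G3 ys) * inverse (- G2 ys))) (at zz)"
    by (rule DERIV_minus[OF h3])
  have h5: "((\<lambda>u. inverse (- G2 (Ginv \<mu> u))) has_real_derivative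
        - ((- ((- 2 * G3 ys) * inverse (- G2 ys))) * inverse ((- G2 (Ginv \<mu> zz)) ^ Suc (Suc 0)))) (at zz)"
    by (rule DERIV_inverse_fun[OF h4]) (use G2_pos[OF ys_gt] zE in simp)
  have z0: "zz \<noteq> 0" using zz_pos by simp
  have h6: "((\<lambda>u. (1 - real n) / u^2) has_real_derivative - ((1 - real n) * (2 * zz) / (zz^2)^2)) (at zz)"
  proof -
    have "((\<lambda>u. u^2) has_real_derivative 2 * zz) (at zz)" using DERIV_pow[of 2 zz] by simp
    from DERIV_inverse_fun[OF this] z0 have "((\<lambda>u. inverse (u^2)) has_real_derivative - (2 * zz * inverse ((zz^2)^2))) (at zz)"
      by (simp add: numeral_2_eq_2)
    from DERIV_cmult[OF this, of "1 - real n"] show ?thesis by (simp add: divide_inverse mult.assoc)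
  qed
  have "(D has_real_derivative real n * (- ((- ((- 2 * G3 ys) * inverse (- G2 ys))) * inverse ((- G2 (Ginv \<mu> zz)) ^ Suc (Suc 0)))) - (- ((1 - real n) * (2 * zz) / (zz^2)^2))) (at zz)"
    unfolding D_def[abs_def] by (intro DERIV_diff DERIV_cmult h5 h6)
  then show ?thesis unfolding zE by (simp add: power2_eq_square)
qed

lemma Afun_second: "deriv (deriv (Afun \<mu> n)) zz > 0"
proof -
  define a where "a = (Ep + ys) / 2"
  have a: "Ep < a" "a < ys" using ys_gt by (auto simp: a_def)
  have ev: "eventually (\<lambda>u. deriv (Afun \<mu> n) u = D u) (nhds zz)"
  proof (rule eventually_nhds_in_open[of "{G (ys+1)<..<G a}", THEN eventually_mono])
    show "open {G (ys+1)<..<G a}" by simp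
    show "zz \<in> {G (ys+1)<..<G a}" unfolding zz_def using G_dec a ys_gt by auto
    fix u assume "u \<in> {G (ys+1)<..<G a}"
    then obtain y where "a < y" "y < ys + 1" "G y = u" using G_surj2[of a "ys+1" u] a by auto
    then show "deriv (Afun \<mu> n) u = D u" using Afun_deriv_D[of y] a by auto
  qed
  have "deriv (deriv (Afun \<mu> n)) zz = deriv D zz" by (rule deriv_cong_ev[OF ev refl])
  also have "\<dots> = real n * (- ((- ((- 2 * G3 ys) * inverse (- G2 ys))) * inverse ((- G2 ys)^2))) - (- ((1 - real n) * (2 * zz) / (zz^2)^2))"
    by (rule DERIV_imp_deriv[OF D_deriv])
  also have "\<dots> = 2 * real n * (G3 ys * zz - (G2 ys)^2) / ((G2 ys)^3 * zz)"
  proof -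
    have g2: "G2 ys > 0" by (rule G2_pos[OF ys_gt])
    have pz: "real n * zz^2 = (real n - 1) * G2 ys" using p_ys unfolding p_def zz_def by simp
    have e: "1 - real n = - real n * zz^2 / G2 ys" using pz g2 by (simp add: field_simps)
    show ?thesis unfolding e using g2 zz_pos by (simp add: field_simps power2_eq_square power3_eq_cube)
  qed
  also have "\<dots> > 0"
  proof -
    have "(G2 ys)^2 < G ys * G3 ys" using CS2[OF inM npm ys_gt] by simp
    then have "G3 ys * zz - (G2 ys)^2 > 0" by (simp add: zz_def mult.commute)
    moreover have "real n > 0" using n1 by simp
    ultimately show ?thesis using G2_pos[OF ys_gt] zz_pos by simp
  qed
  finally show ?thesis .
qed

lemma GEp_mu: "GEp \<mu> = (SUP x\<in>{Ep<..}. ereal (G x))"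
proof -
  have "((\<lambda>x. ereal (Gr \<mu> x)) \<longlongrightarrow> (SUP x\<in>{Ep<..}. ereal (G x))) (at_right Ep)"
    unfolding Gr_eq_CT by (rule dec_ereal_tendsto) (use G_dec in \<open>auto intro: less_imp_le\<close>)
  then show ?thesis unfolding GEp_def by (intro tendsto_Lim) auto
qed

lemma zz_lt_GEp: "ereal zz < GEp \<mu>"
proof -
  define a where "a = (Ep + ys) / 2"
  have a: "Ep < a" "a < ys" using ys_gt by (auto simp: a_def)
  have "zz < G a" unfolding zz_def using G_dec a by auto
  also have "ereal (G a) \<le> (SUP x\<in>{Ep<..}. ereal (G x))" using a by (intro SUP_upper) auto
  finally show ?thesis unfolding GEp_mu by simp
qed

lemma ys_far: "Ginv \<mu> zz - Ep \<ge> 4 * (Ep - Em)"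
  using ys_ge unfolding Ginv_zz by (simp add: xpt_def)

end

context Ms begin

definition Phi :: "real \<Rightarrow> real" where "Phi y = real n * y + (1 - real n) / G y"

lemma Phi_deriv: "y > Ep \<Longrightarrow> (Phi has_real_derivative p y / (G y)^2) (at y)"
proof -
  assume y: "y > Ep"
  have g: "G y \<noteq> 0" using G_pos[OF y] by simp
  have "(Phi has_real_derivative real n * 1 + (1 - real n) * (- (- G2 y * inverse (G y ^ Suc (Suc 0))))) (at y)"
    unfolding Phi_def[abs_def] divide_inverse
    by (intro DERIV_add DERIV_cmult DERIV_ident DERIV_inverse_fun G_deriv[OF y] g)
  moreover have "real n * 1 + (1 - real n) * (- (- G2 y * inverse (G y ^ Suc (Suc 0)))) = p y / (G y)^2"
    unfolding p_def using g by (simp add: field_simps power2_eq_square)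
  ultimately show ?thesis by simp
qed

lemma Phi_cont: "y > Ep \<Longrightarrow> isCont Phi y"
  using Phi_deriv DERIV_isCont by blast

lemma Phi_cont_on: "Ep < a \<Longrightarrow> continuous_on {a..b} Phi"
  using Phi_cont by (intro continuous_at_imp_continuous_on) auto

lemma Phi_mono: "ys \<le> y1 \<Longrightarrow> y1 < y2 \<Longrightarrow> Phi y1 < Phi y2"
proof -
  assume y: "ys \<le> y1" "y1 < y2"
  show "Phi y1 < Phi y2"
  proof (rule DERIV_pos_imp_increasing_open[OF y(2)])
    fix x assume x: "y1 < x" "x < y2"
    then have xs: "x > ys" "x > Ep" using y ys_gt by auto
    show "\<exists>D. (Phi has_real_derivative D) (at x) \<and> 0 < D"
      using Phi_deriv[OF xs(2)] p_after[OF xs(1)] G_pos[OF xs(2)] by auto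
  next
    show "continuous_on {y1..y2} Phi" using y ys_gt by (intro Phi_cont_on) auto
  qed
qed

lemma Phi_inj: "ys \<le> y1 \<Longrightarrow> ys \<le> y2 \<Longrightarrow> Phi y1 = Phi y2 \<Longrightarrow> y1 = y2"
  using Phi_mono by (metis less_irrefl linorder_neqE_linordered_idom)

lemma Phi_lower: "y > Ep \<Longrightarrow> Phi y \<ge> y + (real n - 1) * Em"
proof -
  assume y: "y > Ep"
  have g: "G y \<ge> 1 / (y - Em)" using CT_bounds(1)[OF inM y, of 1] by simp
  have yE: "y - Em > 0" using y EmEp by simp
  have "1 / G y \<le> y - Em" using g yE G_pos[OF y] by (simp add: field_simps)
  then have "(1 - real n) / G y \<ge> (1 - real n) * (y - Em)"
  proof -
    have "(1 - real n) * (y - Em) \<le> (1 - real n) * (1 / G y)"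
      by (rule mult_left_mono_neg) (use \<open>1 / G y \<le> y - Em\<close> n1 in auto)
    then show ?thesis by simp
  qed
  then show ?thesis unfolding Phi_def by (simp add: algebra_simps)
qed

definition a0 :: real where "a0 = Phi ys"

lemma Phi_surj:
  assumes "x \<ge> a0" shows "\<exists>y\<ge>ys. Phi y = x"
proof -
  define b where "b = max (ys + 1) (x - (real n - 1) * Em)"
  have b: "b > Ep" "ys \<le> b" using ys_gt by (auto simp: b_def)
  have "Phi b \<ge> x" using Phi_lower[OF b(1)] by (simp add: b_def)
  then obtain y where "y \<ge> ys" "y \<le> b" "Phi y = x"
    using IVT[of Phi ys x b] assms b Phi_cont ys_gt by (force simp: a0_def)
  then show ?thesis by blast
qed

definition Yf :: "real \<Rightarrow> real" where "Yf x = (THE y. ys \<le> y \<and> Phi y = x)"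

lemma Yf: "x \<ge> a0 \<Longrightarrow> ys \<le> Yf x \<and> Phi (Yf x) = x"
  unfolding Yf_def using Phi_surj by (rule_tac theI') (auto intro: Phi_inj)

lemma Yf_Phi: "ys \<le> y \<Longrightarrow> Yf (Phi y) = y"
  unfolding Yf_def by (rule the_equality) (auto intro: Phi_inj)

lemma Yf_gt: "x > a0 \<Longrightarrow> Yf x > ys"
  using Yf[of x] unfolding a0_def by (metis less_eq_real_def less_irrefl)

lemma Yf_cont: "x > a0 \<Longrightarrow> isCont Yf x"
proof -
  assume x: "x > a0"
  define y where "y = Yf x"
  have y: "y > ys" "Phi y = x" using Yf_gt[OF x] Yf[of x] x by (auto simp: y_def)
  have "isCont Yf (Phi y)"
  proof (rule isCont_inverse_function[where d="(y - ys)/2" and f=Phi and x=y])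
    show "0 < (y - ys)/2" using y by simp
    fix z assume "\<bar>z - y\<bar> \<le> (y - ys) / 2"
    then have z: "z > ys" using y by (auto simp: abs_if split: if_splits)
    show "Yf (Phi z) = z" using Yf_Phi z by simp
    show "isCont Phi z" using Phi_cont z ys_gt by simp
  qed
  then show ?thesis using y by simp
qed

lemma Yf_right: "(Yf \<longlongrightarrow> ys) (at_right a0)"
proof (rule order_tendstoI)
  fix c assume "c < ys"
  show "eventually (\<lambda>x. c < Yf x) (at_right a0)"
    unfolding eventually_at_right_field using Yf_gt \<open>c < ys\<close>
    by (intro exI[of _ "a0+1"]) (auto intro: less_trans)
next
  fix c assume c: "ys < c"
  show "eventually (\<lambda>x. Yf x < c) (at_right a0)"
    unfolding eventually_at_right_field
  proof (intro exI[of _ "Phi c"] conjI allI impI)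
    show "a0 < Phi c" unfolding a0_def using Phi_mono c by simp
    fix x assume x: "a0 < x" "x < Phi c"
    show "Yf x < c"
    proof (rule ccontr)
      assume "\<not> Yf x < c"
      then have "Phi c \<le> Phi (Yf x)" using Phi_mono[of c "Yf x"] c by (cases "c = Yf x") auto
      then show False using x Yf[of x] by simp
    qed
  qed
qed

lemma Yf_deriv: "x > a0 \<Longrightarrow> (Yf has_real_derivative inverse (p (Yf x) / (G (Yf x))^2)) (at x)"
proof -
  assume x: "x > a0"
  define y where "y = Yf x"
  have y: "y > ys" "Phi y = x" using Yf_gt[OF x] Yf[of x] x by (auto simp: y_def)
  have yE: "y > Ep" using y ys_gt by simp
  have "(Phi has_real_derivative p y / (G y)^2) (at (Yf x))" using Phi_deriv[OF yE] by (simp add: y_def)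
  then have "(Yf has_real_derivative inverse (p y / (G y)^2)) (at x)"
  proof (rule DERIV_inverse_function[where a=a0 and b="x+1"])
    show "p y / (G y)^2 \<noteq> 0" using p_after[OF y(1)] G_pos[OF yE] by simp
    show "a0 < x" "x < x + 1" using x by auto
    show "\<And>z. a0 < z \<Longrightarrow> z < x + 1 \<Longrightarrow> Phi (Yf z) = z" using Yf by simp
    show "isCont Yf x" by (rule Yf_cont[OF x])
  qed
  then show ?thesis by (simp add: y_def)
qed

end

locale Mnu = Ms +
  fixes \<nu> :: "real measure"
  assumes fc: "is_free_conv_power \<mu> n \<nu>"
begin

lemma inMnu: "in_M \<nu>" using fc by (simp add: is_free_conv_power_def)

abbreviation "e \<equiv> Eplus \<nu>"
abbreviation H :: "real \<Rightarrow> real" where "H \<equiv> CT \<nu> 1"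
abbreviation GC :: "complex \<Rightarrow> complex" where "GC \<equiv> CT \<mu> 1"
abbreviation HC :: "complex \<Rightarrow> complex" where "HC \<equiv> CT \<nu> 1"

definition PhiC :: "complex \<Rightarrow> complex" where "PhiC w = of_nat n * w + (1 - of_nat n) / GC w"

lemma H_pos: "x > e \<Longrightarrow> H x > 0" using CT_pos[OF inMnu] by simp

lemma rel_tail: "\<exists>T. \<forall>y\<ge>T. ys < y \<and> e < Phi y \<and> H (Phi y) = G y"
proof -
  obtain R where R: "\<And>x. x > R \<Longrightarrow> real n * Ginv \<mu> (Gr \<nu> x) + (1 - real n) / Gr \<nu> x = x"
    using fc by (auto simp: is_free_conv_power_def)
  have "eventually (\<lambda>x. H x < zz) at_top"
    using CT_tendsto_0[OF inMnu, of 0] zz_pos by (simp add: order_tendsto_iff)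
  then obtain X1 where X1: "\<And>x. x \<ge> X1 \<Longrightarrow> H x < zz" by (auto simp: eventually_at_top_linorder)
  define B where "B = max (max R e) X1 + 1"
  define T where "T = max (ys + 1) (B - (real n - 1) * Em)"
  have "ys < y \<and> e < Phi y \<and> H (Phi y) = G y" if y: "y \<ge> T" for y
  proof -
    have yys: "y > ys" using y by (simp add: T_def)
    have yE: "y > Ep" using yys ys_gt by simp
    define x where "x = Phi y"
    have xB: "x \<ge> B" using Phi_lower[OF yE] y by (simp add: x_def T_def)
    then have xR: "x > R" "x > e" "x \<ge> X1" by (auto simp: B_def)
    have Hx: "0 < H x" "H x < zz" using H_pos[OF xR(2)] X1[OF xR(3)] by auto
    then obtain y' where y': "y' \<ge> ys" "G y' = H x" using G_surj[OF ys_gt, of "H x"] by (auto simp: zz_def)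
    have "y' \<noteq> ys" using y' Hx by (auto simp: zz_def)
    then have y'E: "y' > Ep" using y' ys_gt by simp
    have gi: "Ginv \<mu> (H x) = y'" using Ginv_G[OF y'E] y'(2) by metis
    have r: "real n * Ginv \<mu> (H x) + (1 - real n) / H x = x" using R[OF xR(1)] unfolding Gr_CT .
    have "Phi y' = real n * y' + (1 - real n) / H x" unfolding Phi_def y'(2) ..
    then have "Phi y' = x" using r gi by simp
    then have "y' = y" using Phi_inj[of y' y] y' yys by (simp add: x_def)
    then show ?thesis using yys xR y' by (simp add: x_def)
  qed
  then show ?thesis by blast
qed

definition V0 :: "complex set" where "V0 = (- Idom \<mu>) \<inter> GC -` (- {0})"
definition U :: "complex set" where "U = V0 \<inter> PhiC -` (- Idom \<nu>)"

lemma GC_holo: "GC holomorphic_on (- Idom \<mu>)" by (rule CT_holo[OF inM])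
lemma HC_holo: "HC holomorphic_on (- Idom \<nu>)" by (rule CT_holo[OF inMnu])

lemma V0_open: "open V0"
  unfolding V0_def by (rule continuous_open_preimage[OF holomorphic_on_imp_continuous_on[OF GC_holo] Idom_open]) auto

lemma PhiC_holo: "PhiC holomorphic_on V0"
  unfolding PhiC_def[abs_def]
  by (intro holomorphic_intros holomorphic_on_subset[OF GC_holo]) (auto simp: V0_def)

lemma U_open: "open U"
  unfolding U_def by (rule continuous_open_preimage[OF holomorphic_on_imp_continuous_on[OF PhiC_holo] V0_open Idom_open])

definition F :: "complex \<Rightarrow> complex" where "F w = HC (PhiC w) - GC w"

lemma F_holo: "F holomorphic_on U"
proof -
  have "(HC \<circ> PhiC) holomorphic_on U"
    by (rule holomorphic_on_compose_gen[OF holomorphic_on_subset[OF PhiC_holo] HC_holo]) (auto simp: U_def)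
  moreover have "GC holomorphic_on U" by (rule holomorphic_on_subset[OF GC_holo]) (auto simp: U_def V0_def)
  ultimately show ?thesis unfolding F_def[abs_def] by (intro holomorphic_intros) (auto simp: o_def)
qed

lemma GC_real: "GC (of_real y) = of_real (G y)" by (rule CT_complex_of_real)
lemma HC_real: "HC (of_real y) = of_real (H y)" by (rule CT_complex_of_real)

lemma PhiC_real: "PhiC (of_real y) = of_real (Phi y)"
  unfolding PhiC_def Phi_def GC_real by simp

lemma real_in_U: "y > ys \<Longrightarrow> Phi y > e \<Longrightarrow> complex_of_real y \<in> U"
proof -
  assume y: "y > ys" "Phi y > e"
  have yE: "y > Ep" using y ys_gt by simp
  show ?thesis unfolding U_def V0_def
    using Idom_real[OF yE] Idom_real[OF y(2)] G_pos[OF yE] by (auto simp: CT_complex_of_real PhiC_real)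
qed

lemma F_real: "y > Ep \<Longrightarrow> F (of_real y) = of_real (H (Phi y) - G y)"
  unfolding F_def PhiC_real HC_real GC_real by simp

definition Jset :: "real set" where "Jset = {y. ys < y \<and> e < Phi y}"

lemma Jset_interval: "is_interval Jset"
  unfolding is_interval_1
proof (intro ballI allI impI)
  fix a b x assume ab: "a \<in> Jset" "b \<in> Jset" "a \<le> x \<and> x \<le> b"
  then have a: "ys < a" "e < Phi a" by (auto simp: Jset_def)
  have "Phi a \<le> Phi x" using Phi_mono[of a x] a ab(3) by (cases "a = x") auto
  then show "x \<in> Jset" using a ab(3) by (auto simp: Jset_def)
qed

lemma rel_all: "y > ys \<Longrightarrow> Phi y > e \<Longrightarrow> H (Phi y) = G y"
proof -
  assume y: "y > ys" "Phi y > e"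
  obtain T where T: "\<And>y. y \<ge> T \<Longrightarrow> ys < y \<and> e < Phi y \<and> H (Phi y) = G y" using rel_tail by blast
  define \<xi> where "\<xi> = complex_of_real (T + 1)"
  define S where "S = connected_component_set U \<xi>"
  have JU: "of_real ` Jset \<subseteq> U" using real_in_U by (auto simp: Jset_def)
  have TJ: "T + 1 \<in> Jset" using T[of "T+1"] by (simp add: Jset_def)
  have conn: "connected (complex_of_real ` Jset)"
    by (intro connected_continuous_image is_interval_connected Jset_interval continuous_intros)
  have JS: "of_real ` Jset \<subseteq> S" unfolding S_def \<xi>_def
    by (rule connected_component_maximal[OF imageI[OF TJ] conn JU])
  have ZS: "of_real ` {T..} \<subseteq> S" using JS T by (force simp: Jset_def)
  have "F (of_real y) = 0"
  proof (rule analytic_continuation[of F S "of_real ` {T..}" \<xi>])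
    show "F holomorphic_on S" by (rule holomorphic_on_subset[OF F_holo]) (auto simp: S_def connected_component_subset)
    show "open S" unfolding S_def by (rule open_connected_component[OF U_open])
    show "connected S" unfolding S_def by simp
    show "of_real ` {T..} \<subseteq> S" by (rule ZS)
    show "\<xi> \<in> S" unfolding \<xi>_def by (rule subsetD[OF ZS imageI]) simp
    show "\<xi> islimpt complex_of_real ` {T..}"
      unfolding islimpt_approachable
    proof (intro allI impI)
      fix d :: real assume d: "d > 0"
      show "\<exists>x'\<in>complex_of_real ` {T..}. x' \<noteq> \<xi> \<and> dist x' \<xi> < d"
      proof (rule bexI[of _ "of_real (T + 1 + min 1 (d/2))"])
        have "dist (complex_of_real (T + 1 + min 1 (d/2))) \<xi> = dist (T + 1 + min 1 (d/2)) (T + 1)"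
          unfolding \<xi>_def by (rule dist_of_real)
        also have "\<dots> = min 1 (d/2)" using d by (simp add: dist_real_def)
        finally have "dist (complex_of_real (T + 1 + min 1 (d/2))) \<xi> < d" using d by linarith
        moreover have "complex_of_real (T + 1 + min 1 (d/2)) \<noteq> \<xi>" unfolding \<xi>_def of_real_eq_iff using d by simp
        ultimately show "complex_of_real (T + 1 + min 1 (d/2)) \<noteq> \<xi> \<and> dist (complex_of_real (T + 1 + min 1 (d/2))) \<xi> < d" by simp
        show "complex_of_real (T + 1 + min 1 (d/2)) \<in> complex_of_real ` {T..}" by (rule imageI) (use d in simp)
      qed
    qed
    fix w assume "w \<in> complex_of_real ` {T..}"
    then obtain t where t: "t \<ge> T" "w = of_real t" by auto
    then have tE: "t > Ep" using T[OF t(1)] ys_gt by simp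
    show "F w = 0" unfolding t(2) F_real[OF tE] using T[OF t(1)] by simp
  next
    show "complex_of_real y \<in> S" using JS y by (auto simp: Jset_def)
  qed
  then show ?thesis using F_real[of y] y ys_gt by simp
qed

end

lemma DERIV_right_quot:
  assumes "(f has_real_derivative D) (at x)"
  shows "((\<lambda>y. (f y - f x) / (y - x)) \<longlongrightarrow> D) (at_right x)"
  using assms unfolding has_field_derivative_iff by (simp add: filterlim_at_split)

lemma quot_helper: "(c::real) \<noteq> 0 \<Longrightarrow> (A / c) * inverse (B / c) = A / B"
  by (cases "B = 0") (simp_all add: field_simps)

lemma tendsto_at_bot_False:
  fixes f :: "'a \<Rightarrow> real"
  assumes "F \<noteq> bot" "(f \<longlongrightarrow> c) F" "filterlim f at_bot F"
  shows False
proof -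
  have "eventually (\<lambda>x. c - 1 < f x) F" using assms(2) by (rule order_tendstoD) simp
  moreover have "eventually (\<lambda>x. f x \<le> c - 1) F" using assms(3) by (simp add: filterlim_at_bot)
  ultimately have "eventually (\<lambda>x. False) F" by eventually_elim simp
  then show False using assms(1) by (simp add: eventually_False)
qed

context Mnu begin

lemma H_Yf: "x > a0 \<Longrightarrow> x > e \<Longrightarrow> H x = G (Yf x)"
  using rel_all[of "Yf x"] Yf[of x] Yf_gt[of x] by simp

lemma G_Yf_right: "((\<lambda>x. G (Yf x)) \<longlongrightarrow> zz) (at_right a0)"
  unfolding zz_def by (rule isCont_tendsto_compose[OF G_cont[OF ys_gt] Yf_right])

lemma Phi_right: "filterlim Phi (at_right a0) (at_right ys)"
  unfolding filterlim_at
proof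
  show "eventually (\<lambda>x. Phi x \<in> {a0<..} \<and> Phi x \<noteq> a0) (at_right ys)"
    unfolding eventually_at_right_field a0_def using Phi_mono[OF order_refl] by (intro exI[of _ "ys+1"]) force
  show "(Phi \<longlongrightarrow> a0) (at_right ys)"
    unfolding a0_def using Phi_cont[OF ys_gt] by (simp add: isCont_def filterlim_at_split)
qed

lemma case_lt: "e < a0 \<Longrightarrow> False"
proof -
  assume ea: "e < a0"
  have Hd: "(H has_real_derivative - CT \<nu> 2 a0) (at a0)"
    using CT_real_deriv[OF inMnu ea, of 1] by (simp add: numeral_2_eq_2)
  have Ha0: "H a0 = zz"
  proof -
    have "(H \<longlongrightarrow> H a0) (at_right a0)"
      using DERIV_isCont[OF Hd] by (simp add: isCont_def filterlim_at_split)
    moreover have "eventually (\<lambda>x. G (Yf x) = H x) (at_right a0)"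
      unfolding eventually_at_right_field using H_Yf ea by (intro exI[of _ "a0+1"]) auto
    then have "(H \<longlongrightarrow> zz) (at_right a0)" using G_Yf_right by (rule Lim_transform_eventually[rotated])
    ultimately show ?thesis using tendsto_unique by (metis trivial_limit_at_right_real)
  qed
  define Q where "Q s = (H (Phi s) - H a0) / (Phi s - a0)" for s
  have "(Q \<longlongrightarrow> - CT \<nu> 2 a0) (at_right ys)"
    unfolding Q_def by (rule filterlim_compose[OF DERIV_right_quot[OF Hd] Phi_right])
  moreover have "filterlim Q at_bot (at_right ys)"
  proof -
    define q1 where "q1 s = (G s - G ys) / (s - ys)" for s
    define q2 where "q2 s = (Phi s - Phi ys) / (s - ys)" for s
    have q1: "(q1 \<longlongrightarrow> - G2 ys) (at_right ys)" unfolding q1_def by (rule DERIV_right_quot[OF G_deriv[OF ys_gt]])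
    have q2: "(q2 \<longlongrightarrow> 0) (at_right ys)"
      unfolding q2_def using DERIV_right_quot[OF Phi_deriv[OF ys_gt]] p_ys by simp
    have q2p: "eventually (\<lambda>s. 0 < q2 s) (at_right ys)"
      unfolding eventually_at_right_field q2_def using Phi_mono[OF order_refl] by (intro exI[of _ "ys+1"]) auto
    have lim: "filterlim (\<lambda>s. q1 s * inverse (q2 s)) at_bot (at_right ys)"
      by (rule filterlim_tendsto_neg_mult_at_bot[OF q1 _ filterlim_inverse_at_top[OF q2 q2p]])
         (use G2_pos[OF ys_gt] in simp)
    have ev: "eventually (\<lambda>s. q1 s * inverse (q2 s) = Q s) (at_right ys)"
      unfolding eventually_at_right_field
    proof (intro exI[of _ "ys+1"] conjI allI impI)
      fix s assume s: "ys < s" "s < ys + 1"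
      have "Phi s > a0" using Phi_mono[OF order_refl, of s] s by (simp add: a0_def)
      then have hs: "H (Phi s) = G s" using rel_all[of s] s ea by simp
      have "Phi s - Phi ys \<noteq> 0" using Phi_mono[OF order_refl, of s] s by simp
      then show "q1 s * inverse (q2 s) = Q s"
        unfolding q1_def q2_def Q_def hs Ha0 using s by (subst quot_helper) (simp_all add: a0_def zz_def)
    qed simp
    show ?thesis using lim filterlim_cong[OF refl refl ev] by simp
  qed
  ultimately show False by (intro tendsto_at_bot_False[of "at_right ys"]) auto
qed

lemma GEp_nu: "e = a0 \<Longrightarrow> GEp \<nu> = ereal zz"
proof -
  assume ea: "e = a0"
  have "eventually (\<lambda>x. G (Yf x) = Gr \<nu> x) (at_right e)"
    unfolding eventually_at_right_field using H_Yf ea by (intro exI[of _ "a0+1"]) (auto simp: Gr_CT)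
  then have "(Gr \<nu> \<longlongrightarrow> zz) (at_right e)" using G_Yf_right ea by (simp add: Lim_transform_eventually[rotated])
  then have "((\<lambda>x. ereal (Gr \<nu> x)) \<longlongrightarrow> ereal zz) (at_right e)" by (rule tendsto_ereal)
  then show ?thesis unfolding GEp_def by (intro tendsto_Lim) auto
qed

lemma deriv_H: "e = a0 \<Longrightarrow> x > a0 \<Longrightarrow> deriv (Gr \<nu>) x = - (G2 (Yf x) * (G (Yf x))^2) * inverse (p (Yf x))"
proof -
  assume ea: "e = a0" and x: "x > a0"
  have yE: "Yf x > Ep" using Yf_gt[OF x] ys_gt by simp
  have ev: "eventually (\<lambda>u. Gr \<nu> u = G (Yf u)) (nhds x)"
    by (rule eventually_nhds_in_open[of "{a0<..}", THEN eventually_mono]) (use x ea H_Yf in \<open>auto simp: Gr_CT\<close>)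
  have "deriv (Gr \<nu>) x = deriv (\<lambda>u. G (Yf u)) x" by (rule deriv_cong_ev[OF ev refl])
  also have "\<dots> = - G2 (Yf x) * inverse (p (Yf x) / (G (Yf x))^2)"
    by (rule DERIV_imp_deriv[OF DERIV_chain2[OF G_deriv[OF yE] Yf_deriv[OF x]]])
  also have "\<dots> = - (G2 (Yf x) * (G (Yf x))^2) * inverse (p (Yf x))"
    using G_pos[OF yE] by (simp add: field_simps)
  finally show ?thesis .
qed

lemma deriv_H_lim: "e = a0 \<Longrightarrow> filterlim (\<lambda>x. deriv (Gr \<nu>) x) at_bot (at_right e)"
proof -
  assume ea: "e = a0"
  have c1: "((\<lambda>x. - (G2 (Yf x) * (G (Yf x))^2)) \<longlongrightarrow> - (G2 ys * (G ys)^2)) (at_right a0)"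
    by (intro tendsto_intros isCont_tendsto_compose[OF G2_cont[OF ys_gt] Yf_right] isCont_tendsto_compose[OF G_cont[OF ys_gt] Yf_right])
  have c2: "((\<lambda>x. p (Yf x)) \<longlongrightarrow> 0) (at_right a0)"
    using isCont_tendsto_compose[OF p_cont[OF ys_gt] Yf_right] p_ys by simp
  have c3: "eventually (\<lambda>x. 0 < p (Yf x)) (at_right a0)"
    unfolding eventually_at_right_field using Yf_gt p_after by (intro exI[of _ "a0+1"]) auto
  have lim: "filterlim (\<lambda>x. - (G2 (Yf x) * (G (Yf x))^2) * inverse (p (Yf x))) at_bot (at_right a0)"
    by (rule filterlim_tendsto_neg_mult_at_bot[OF c1 _ filterlim_inverse_at_top[OF c2 c3]])
       (use G2_pos[OF ys_gt] G_pos[OF ys_gt] in simp)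
  have ev: "eventually (\<lambda>x. - (G2 (Yf x) * (G (Yf x))^2) * inverse (p (Yf x)) = deriv (Gr \<nu>) x) (at_right a0)"
    unfolding eventually_at_right_field using deriv_H[OF ea] by (intro exI[of _ "a0+1"]) auto
  show ?thesis using lim filterlim_cong[OF refl refl ev] ea by simp
qed

end

lemma CT_hderiv:
  assumes "in_M \<nu>" "w \<notin> Idom \<nu>"
  shows "(deriv ^^ k) (CT \<nu> 1 :: complex \<Rightarrow> complex) w = (-1)^k * fact k * CT \<nu> (Suc k) w"
  using assms(2)
proof (induction k arbitrary: w)
  case 0 then show ?case by simp
next
  case (Suc k)
  have ev: "eventually (\<lambda>u. (deriv ^^ k) (CT \<nu> 1 :: complex \<Rightarrow> complex) u = (-1)^k * fact k * CT \<nu> (Suc k) u) (nhds w)"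
    by (rule eventually_nhds_in_open[OF Idom_open, THEN eventually_mono]) (use Suc in auto)
  have "(deriv ^^ Suc k) (CT \<nu> 1 :: complex \<Rightarrow> complex) w = deriv ((deriv ^^ k) (CT \<nu> 1)) w" by simp
  also have "\<dots> = deriv (\<lambda>u. (-1)^k * fact k * CT \<nu> (Suc k) u) w" by (rule deriv_cong_ev[OF ev refl])
  also have "\<dots> = (-1)^k * fact k * (- of_nat (Suc k) * CT \<nu> (Suc (Suc k)) w)"
    by (rule DERIV_imp_deriv[OF DERIV_cmult[OF CT_deriv[OF assms(1) Suc.prems]]])
  also have "\<dots> = (-1)^Suc k * fact (Suc k) * CT \<nu> (Suc (Suc k)) w"
    by (simp add: algebra_simps)
  finally show ?case .
qed

lemma CT_lower_ball:
  assumes "in_M \<nu>" "0 < r" "x0 = Eplus \<nu> + r / 4"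
  shows "CT \<nu> (Suc k) x0 \<ge> measure \<nu> (ball (Eplus \<nu>) (r/8)) * (8 / (3 * r))^(Suc k)"
proof -
  interpret prob_space \<nu> using inM_basic[OF assms(1)] by auto
  have sets: "sets \<nu> = sets borel" using inM_basic[OF assms(1)] by simp
  have x0: "x0 > Eplus \<nu>" using assms by simp
  let ?c = "(8 / (3 * r))^(Suc k)"
  have "(LINT t|\<nu>. ?c * indicator (ball (Eplus \<nu>) (r/8)) t) \<le> (LINT t|\<nu>. 1 / (x0 - t)^(Suc k))"
  proof (rule integral_mono_AE)
    show "integrable \<nu> (\<lambda>t. ?c * indicator (ball (Eplus \<nu>) (r/8)) t)"
      by (intro integrable_mult_right integrable_real_indicator) (auto simp: sets less_top[symmetric])
    show "integrable \<nu> (\<lambda>t. 1 / (x0 - t)^(Suc k))" using CT_int_real[OF assms(1) x0] by blast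
    show "AE t in \<nu>. ?c * indicator (ball (Eplus \<nu>) (r/8)) t \<le> 1 / (x0 - t)^(Suc k)"
      using AE_supp[OF assms(1)]
    proof (rule AE_mp, intro AE_I2 impI)
      fix t assume t: "Eminus \<nu> \<le> t \<and> t \<le> Eplus \<nu>"
      have pos: "x0 - t > 0" using t x0 by simp
      show "?c * indicator (ball (Eplus \<nu>) (r/8)) t \<le> 1 / (x0 - t)^(Suc k)"
      proof (cases "t \<in> ball (Eplus \<nu>) (r/8)")
        case True
        then have "x0 - t < 3 * r / 8" using assms by (auto simp: dist_real_def abs_if split: if_splits)
        then have "(x0 - t)^(Suc k) \<le> (3 * r / 8)^(Suc k)" using pos by (intro power_mono) auto
        then have "1 / (3 * r / 8)^(Suc k) \<le> 1 / (x0 - t)^(Suc k)"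
          using pos assms(2) by (intro divide_left_mono) auto
        then show ?thesis using True assms(2) by (simp add: power_divide)
      next
        case False then show ?thesis using pos by simp
      qed
    qed
  qed
  moreover have fin: "emeasure \<nu> (ball (Eplus \<nu>) (r/8)) < \<top>"
    by (subst less_top[symmetric]) (rule emeasure_finite)
  ultimately show ?thesis by (simp add: CT_real_def mult.commute sets)
qed

context Mnu begin

lemma PhiC_deriv_real:
  assumes y: "y > Ep"
  shows "(PhiC has_field_derivative of_real (p y / (G y)^2)) (at (of_real y))"
proof -
  let ?w = "complex_of_real y"
  have w: "?w \<notin> Idom \<mu>" by (rule Idom_real[OF y])
  have g: "GC ?w \<noteq> 0" using G_pos[OF y] by (simp add: CT_complex_of_real)
  have "(PhiC has_field_derivative (of_nat n * 1 + (1 - of_nat n) * (- ((- of_nat 1 * CT \<mu> (Suc 1) ?w) * inverse (GC ?w ^ Suc (Suc 0)))))) (at ?w)"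
    unfolding PhiC_def[abs_def] divide_inverse
    by (intro DERIV_add DERIV_cmult DERIV_ident DERIV_inverse_fun CT_deriv[OF inM w] g)
  moreover have "(of_nat n * 1 + (1 - of_nat n) * (- ((- of_nat 1 * CT \<mu> (Suc 1) ?w) * inverse (GC ?w ^ Suc (Suc 0))))) = complex_of_real (p y / (G y)^2)"
  proof -
    have "(of_nat n * 1 + (1 - of_nat n) * (- ((- of_nat 1 * CT \<mu> (Suc 1) ?w) * inverse (GC ?w ^ Suc (Suc 0))))) =
       complex_of_real (real n * 1 + (1 - real n) * (- ((- 1 * G2 y) * inverse (G y ^ Suc (Suc 0)))))"
      by (simp add: CT_complex_of_real numeral_2_eq_2)
    also have "real n * 1 + (1 - real n) * (- ((- 1 * G2 y) * inverse (G y ^ Suc (Suc 0)))) = p y / (G y)^2"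
      unfolding p_def using G_pos[OF y] by (simp add: field_simps power2_eq_square)
    finally show ?thesis .
  qed
  ultimately show ?thesis by simp
qed

lemma case_gt: "e > a0 \<Longrightarrow> False"
proof -
  assume ea: "e > a0"
  define ye where "ye = Yf e"
  have ye: "ye > ys" "Phi ye = e" using Yf_gt[OF ea] Yf[of e] ea by (auto simp: ye_def)
  have yeE: "ye > Ep" using ye ys_gt by simp
  let ?w0 = "complex_of_real ye"
  have w0V: "?w0 \<in> V0" unfolding V0_def using Idom_real[OF yeE] G_pos[OF yeE] by (simp add: CT_complex_of_real)
  have dnz: "deriv PhiC ?w0 \<noteq> 0"
    using DERIV_imp_deriv[OF PhiC_deriv_real[OF yeE]] p_after[OF ye(1)] G_pos[OF yeE] by simp
  obtain r0 where r0: "r0 > 0" "ball ?w0 r0 \<subseteq> V0" "inj_on PhiC (ball ?w0 r0)"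
    using has_complex_derivative_locally_injective[OF PhiC_holo w0V V0_open dnz] by blast
  define B0 where "B0 = ball ?w0 r0"
  have holB0: "PhiC holomorphic_on B0" using PhiC_holo r0 by (auto simp: B0_def intro: holomorphic_on_subset)
  obtain g where g: "g holomorphic_on (PhiC ` B0)" "\<And>z. z \<in> B0 \<Longrightarrow> g (PhiC z) = z"
  proof -
    have "open B0" "inj_on PhiC B0" using r0(3) by (auto simp: B0_def)
    then show ?thesis using holomorphic_has_inverse[OF holB0] that by metis
  qed
  define W where "W = PhiC ` B0"
  have Wo: "open W" unfolding W_def by (rule open_mapping_thm3[OF holB0]) (use r0 in \<open>auto simp: B0_def\<close>)
  have eW: "complex_of_real e \<in> W" unfolding W_def
    by (rule image_eqI[of _ _ "?w0"]) (use r0(1) ye(2) in \<open>simp_all add: B0_def PhiC_real\<close>)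
  define FF where "FF = GC \<circ> g"
  have gW: "g ` W \<subseteq> B0" unfolding W_def using g(2) by auto
  have FFhol: "FF holomorphic_on W" unfolding FF_def
    by (rule holomorphic_on_compose_gen[OF g(1)[folded W_def] GC_holo]) (use gW r0 in \<open>auto simp: B0_def V0_def\<close>)
  obtain d1 where d1: "d1 > 0" "\<And>x. \<bar>x - e\<bar> < d1 \<Longrightarrow> \<bar>Yf x - ye\<bar> < r0"
  proof -
    have "isCont Yf e" by (rule Yf_cont[OF ea])
    then have "\<forall>r>0. \<exists>s>0. \<forall>x. x \<noteq> e \<and> norm (x - e) < s \<longrightarrow> norm (Yf x - Yf e) < r"
      unfolding isCont_def LIM_eq by blast
    then obtain s where s: "s > 0" "\<And>x. x \<noteq> e \<Longrightarrow> \<bar>x - e\<bar> < s \<Longrightarrow> \<bar>Yf x - ye\<bar> < r0"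
      using r0(1) by (auto simp: ye_def)
    show ?thesis
    proof (rule that[OF s(1)])
      fix x assume "\<bar>x - e\<bar> < s"
      then show "\<bar>Yf x - ye\<bar> < r0" using s(2)[of x] r0(1) by (cases "x = e") (auto simp: ye_def)
    qed
  qed
  have agree: "FF (of_real x) = of_real (H x)" if x: "e < x" "x < e + d1" for x
  proof -
    have "\<bar>Yf x - ye\<bar> < r0" using d1(2)[of x] x by simp
    then have inB: "complex_of_real (Yf x) \<in> B0"
      by (simp add: B0_def dist_of_real dist_real_def abs_minus_commute)
    have xa: "x > a0" using x ea by simp
    have "PhiC (of_real (Yf x)) = of_real x" using Yf[of x] xa by (simp add: PhiC_real)
    then have "g (of_real x) = of_real (Yf x)" using g(2)[OF inB] by simp
    then show ?thesis unfolding FF_def using H_Yf[OF xa] x by (simp add: CT_complex_of_real)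
  qed
  obtain r1 where r1: "r1 > 0" "cball (complex_of_real e) r1 \<subseteq> W"
    using Wo eW by (meson open_contains_cball)
  define r where "r = min r1 d1"
  have r: "r > 0" "cball (complex_of_real e) r \<subseteq> W" "r \<le> d1"
    using r1 d1 by (auto simp: r_def)
  define x0 where "x0 = e + r / 4"
  let ?z0 = "complex_of_real x0"
  have "compact (FF ` cball (complex_of_real e) r)"
    by (intro compact_continuous_image holomorphic_on_imp_continuous_on holomorphic_on_subset[OF FFhol r(2)]) auto
  then have "bounded (FF ` cball (complex_of_real e) r)" by (rule compact_imp_bounded)
  then obtain M where M: "M > 0" "\<And>w. w \<in> cball (complex_of_real e) r \<Longrightarrow> norm (FF w) \<le> M"
    unfolding bounded_pos by auto
  have sub: "cball ?z0 (r/2) \<subseteq> cball (complex_of_real e) r"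
  proof
    fix w assume "w \<in> cball ?z0 (r/2)"
    then have "dist ?z0 w \<le> r/2" by simp
    moreover have "dist (complex_of_real e) ?z0 = dist e x0" by (rule dist_of_real)
    moreover have "dist e x0 = r/4" using r(1) by (simp add: x0_def dist_real_def)
    ultimately have "dist (complex_of_real e) w \<le> r" using dist_triangle[of "complex_of_real e" w ?z0] r(1) by linarith
    then show "w \<in> cball (complex_of_real e) r" by simp
  qed
  have bound: "cmod ((deriv ^^ k) FF ?z0) \<le> fact k * (M + 1) / (r/2)^k" if "k > 0" for k
  proof (rule Cauchy_higher_deriv_bound[where y=0])
    show "FF holomorphic_on ball ?z0 (r/2)"
      by (rule holomorphic_on_subset[OF FFhol]) (use sub r(2) ball_subset_cball in blast)
    show "continuous_on (cball ?z0 (r/2)) FF"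
      by (intro holomorphic_on_imp_continuous_on holomorphic_on_subset[OF FFhol]) (use sub r(2) in blast)
    show "FF w \<in> ball 0 (M + 1)" if "w \<in> ball ?z0 (r/2)" for w
      using M(2)[of w] that sub ball_subset_cball by force
  qed (use r(1) that in auto)
  define Bz where "Bz = ball ?z0 (r/4)"
  have BzI: "Bz \<subseteq> - Idom \<nu>"
  proof
    fix w assume w: "w \<in> Bz"
    show "w \<in> - Idom \<nu>"
    proof
      assume "w \<in> Idom \<nu>"
      then obtain t where t: "t \<le> e" "w = of_real t" by (auto simp: Idom_def)
      then have "dist ?z0 (of_real t) < r/4" using w by (simp add: Bz_def)
      then have "dist x0 t < r/4" by (simp add: dist_of_real)
      then show False using t r(1) by (auto simp: x0_def dist_real_def abs_if split: if_splits)
    qed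
  qed
  have "ball ?z0 (r/4) \<subseteq> cball ?z0 (r/2)" using r(1) by auto
  then have BzW: "Bz \<subseteq> W" using sub r(2) unfolding Bz_def by blast
  have eqBz: "FF w = HC w" if "w \<in> Bz" for w
  proof -
    have "FF w - HC w = 0"
    proof (rule analytic_continuation[of "\<lambda>w. FF w - HC w" Bz "of_real ` {x0..x0 + r/8}" ?z0])
      show "(\<lambda>w. FF w - HC w) holomorphic_on Bz"
        by (intro holomorphic_intros holomorphic_on_subset[OF FFhol BzW] holomorphic_on_subset[OF HC_holo BzI])
      show "open Bz" "connected Bz" by (auto simp: Bz_def)
      show "complex_of_real ` {x0..x0 + r/8} \<subseteq> Bz"
      proof
        fix w assume "w \<in> complex_of_real ` {x0..x0 + r/8}"
        then obtain t where t: "x0 \<le> t" "t \<le> x0 + r/8" "w = of_real t" by auto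
        then have "dist x0 t < r/4" using r(1) by (simp add: dist_real_def)
        then show "w \<in> Bz" using t by (simp add: Bz_def dist_of_real)
      qed
      show "?z0 \<in> Bz" using r(1) by (simp add: Bz_def)
      show "?z0 islimpt complex_of_real ` {x0..x0 + r/8}"
        unfolding islimpt_approachable
      proof (intro allI impI)
        fix d :: real assume d: "d > 0"
        let ?t = "x0 + min (r/8) (d/2)"
        have "dist (complex_of_real ?t) ?z0 = dist ?t x0" by (rule dist_of_real)
        also have "\<dots> = min (r/8) (d/2)" using r(1) d by (simp add: dist_real_def)
        finally have "dist (complex_of_real ?t) ?z0 = min (r/8) (d/2)" .
        then have "dist (complex_of_real ?t) ?z0 < d" using d by linarith
        moreover have "complex_of_real ?t \<noteq> ?z0" unfolding of_real_eq_iff using r(1) d by simp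
        moreover have "complex_of_real ?t \<in> complex_of_real ` {x0..x0 + r/8}" by (rule imageI) (use r(1) d in simp)
        ultimately show "\<exists>x'\<in>complex_of_real ` {x0..x0 + r/8}. x' \<noteq> ?z0 \<and> dist x' ?z0 < d" by blast
      qed
      fix w assume "w \<in> complex_of_real ` {x0..x0 + r/8}"
      then obtain t where t: "x0 \<le> t" "t \<le> x0 + r/8" "w = of_real t" by auto
      have "e < t" "t < e + d1" using t r by (auto simp: x0_def)
      then show "FF w - HC w = 0" using agree t(3) by (simp add: CT_complex_of_real)
    qed (rule that)
    then show ?thesis by simp
  qed
  have evz: "eventually (\<lambda>w. FF w = HC w) (nhds ?z0)"
    by (rule eventually_nhds_in_open[of Bz, THEN eventually_mono]) (use eqBz r(1) in \<open>auto simp: Bz_def\<close>)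
  have "?z0 \<in> Bz" using r(1) by (simp add: Bz_def)
  then have z0I: "?z0 \<notin> Idom \<nu>" using BzI by blast
  define c0 where "c0 = measure \<nu> (ball e (r/8))"
  have c0: "c0 > 0"
  proof -
    interpret prob_space \<nu> using inM_basic[OF inMnu] by auto
    have "\<forall>\<epsilon>>0. emeasure \<nu> (ball e \<epsilon>) > 0" using Eplus_in(1)[OF inMnu] unfolding supp_def by simp
    then have "emeasure \<nu> (ball e (r/8)) > 0" using r(1) by simp
    then show ?thesis unfolding c0_def emeasure_eq_measure by simp
  qed
  have ineq: "c0 * (8 / (3 * r)) * (4/3)^k \<le> M + 1" if k: "k > 0" for k
  proof -
    have "(deriv ^^ k) FF ?z0 = (deriv ^^ k) HC ?z0" by (rule higher_deriv_cong_ev[OF evz refl])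
    also have "\<dots> = (-1)^k * fact k * of_real (CT \<nu> (Suc k) x0)"
      using CT_hderiv[OF inMnu z0I, of k] by (simp add: CT_complex_of_real)
    finally have "cmod ((deriv ^^ k) FF ?z0) = fact k * \<bar>CT \<nu> (Suc k) x0\<bar>"
      by (simp add: norm_mult norm_power)
    moreover have "CT \<nu> (Suc k) x0 \<ge> c0 * (8 / (3 * r))^(Suc k)"
      unfolding c0_def by (rule CT_lower_ball[OF inMnu r(1)]) (simp add: x0_def)
    ultimately have "fact k * (c0 * (8 / (3 * r))^(Suc k)) \<le> fact k * (M + 1) / (r/2)^k"
    proof -
      assume a1: "cmod ((deriv ^^ k) FF ?z0) = fact k * \<bar>CT \<nu> (Suc k) x0\<bar>"
        and a2: "CT \<nu> (Suc k) x0 \<ge> c0 * (8 / (3 * r))^(Suc k)"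
      have "c0 * (8 / (3 * r))^(Suc k) \<le> \<bar>CT \<nu> (Suc k) x0\<bar>" using a2 by linarith
      then have "fact k * (c0 * (8 / (3 * r))^(Suc k)) \<le> fact k * \<bar>CT \<nu> (Suc k) x0\<bar>"
        by (rule mult_left_mono) simp
      also have "\<dots> \<le> fact k * (M + 1) / (r/2)^k" using bound[OF k] a1 by simp
      finally show ?thesis .
    qed
    then have "fact k * (c0 * (8 / (3 * r))^(Suc k)) \<le> fact k * ((M + 1) / (r/2)^k)"
      by (simp only: times_divide_eq_right)
    then have "c0 * (8 / (3 * r))^(Suc k) \<le> (M + 1) / (r/2)^k"
      by (simp only: mult_le_cancel_left_pos[OF fact_gt_zero])
    moreover have pos: "(r/2)^k > 0" using r(1) by simp
    ultimately have "c0 * (8 / (3 * r))^(Suc k) * (r/2)^k \<le> M + 1"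
      by (simp only: pos_le_divide_eq[OF pos])
    moreover have "c0 * (8 / (3 * r))^(Suc k) * (r/2)^k = c0 * (8 / (3 * r)) * (4/3)^k"
    proof -
      have "(8 / (3 * r)) * (r/2) = 4/3" using r(1) by simp
      then have a: "(8 / (3 * r))^k * (r/2)^k = (4/3)^k" by (metis power_mult_distrib)
      have b: "c0 * (8 / (3 * r))^(Suc k) * (r/2)^k = c0 * (8 / (3 * r)) * ((8 / (3 * r))^k * (r/2)^k)"
        by (simp only: power_Suc mult.assoc)
      show ?thesis by (simp only: a b)
    qed
    ultimately show ?thesis by linarith
  qed
  have "eventually (\<lambda>k. (M + 1) / (c0 * (8 / (3 * r))) < (4/3::real)^k) sequentially"
    by (rule Archimedean_eventually_pow) simp
  then obtain N where N: "\<And>k. k \<ge> N \<Longrightarrow> (M + 1) / (c0 * (8 / (3 * r))) < (4/3::real)^k"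
    by (auto simp: eventually_sequentially)
  define k where "k = Suc N"
  have k: "(M + 1) / (c0 * (8 / (3 * r))) < (4/3::real)^k" "k > 0" using N[of k] by (auto simp: k_def)
  moreover have "c0 * (8 / (3 * r)) > 0" using c0 r(1) by simp
  ultimately have "M + 1 < (4/3)^k * (c0 * (8 / (3 * r)))" by (simp only: pos_divide_less_eq)
  then have "M + 1 < c0 * (8 / (3 * r)) * (4/3)^k" by (simp only: mult.commute)
  then show False using ineq[OF k(2)] by simp
qed

end

theorem proposition5p4:
  fixes \<mu> \<nu> :: "real measure" and n :: nat
  assumes "in_M \<mu>"
    and "\<not> (\<exists>a. \<mu> = return borel a)"
    and "n \<ge> 1" and "real n \<ge> tau \<mu>"
    and "is_free_conv_power \<mu> n \<nu>"
  shows "\<exists>z. 0 < z \<and> ereal z < GEp \<mu>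
      \<and> deriv (Afun \<mu> n) z = 0
      \<and> (\<forall>w. 0 < w \<and> w < z \<longrightarrow> deriv (Afun \<mu> n) w \<noteq> 0)
      \<and> deriv (deriv (Afun \<mu> n)) z > 0
      \<and> Ginv \<mu> z - Eplus \<mu> \<ge> 4 * (Eplus \<mu> - Eminus \<mu>)
      \<and> ereal z = GEp \<nu>
      \<and> filterlim (\<lambda>x. deriv (Gr \<nu>) x) at_bot (at_right (Eplus \<nu>))"
proof -
  interpret Mnu \<mu> n \<nu> using assms by unfold_locales auto
  have ea: "e = a0" using case_lt case_gt by (meson linorder_neqE_linordered_idom)
  show ?thesis
    by (rule exI[of _ zz])
       (use zz_pos zz_lt_GEp Afun_crit Afun_noncrit Afun_second ys_far GEp_nu[OF ea] deriv_H_lim[OF ea] in auto)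
qed

end
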